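(* Let $f$ be a probability distribution on $\mathcal{X}=\{0,1\}^p$ with $f(\gamma)>0$ for all $\gamma$, and let $P_{TGS}$ be the Tempered Gibbs Sampler kernel below, with $Z(\gamma)=\frac1p\sum_{i=1}^p p_i(\gamma)$. Define the matrix $Q_{TGS}$ on $\mathcal{X}$ by $Q_{TGS}(\gamma,\gamma')=Z(\gamma)P_{TGS}(\gamma,\gamma')$ for $\gamma'\ne\gamma$ and $Q_{TGS}(\gamma,\gamma)=-\sum_{\gamma'\ne\gamma}Q_{TGS}(\gamma,\gamma')$. Then for every $h:\mathcal{X}\to\mathbb{R}$, $$\mathrm{var}(h,TGS)\le\frac{2\,\mathrm{var}_f(h)}{\mathrm{Gap}(Q_{TGS})},$$ where $\mathrm{Gap}(Q_{TGS})$ is the smallest non-zero eigenvalue of $-Q_{TGS}$.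
   Context: TGS kernel on $\{0,1\}^p$: with $p_i(\gamma)=\frac{1}{2f(\gamma_i|\gamma_{-i})}$, where $f(\gamma_i|\gamma_{-i})$ is the conditional probability under $f$ that coordinate $i$ takes its current value given the others, from $\gamma$ sample $i$ with probability $p_i(\gamma)/\sum_j p_j(\gamma)$ and move to the state obtained by switching $\gamma_i$ to $1-\gamma_i$. The TGS estimator of $\mathbb{E}_f[h]$ is $\hat h_n^{TGS}=\sum_{t=1}^n Z(\gamma^{(t)})^{-1}h(\gamma^{(t)})/\sum_{t=1}^n Z(\gamma^{(t)})^{-1}$ and $\mathrm{var}(h,TGS)=\lim_n n\,\mathrm{var}(\hat h_n^{TGS})$; $\mathrm{var}_f(h)=\mathbb{E}_f[h^2]-\mathbb{E}_f[h]^2$. *)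

theory Defs
  imports Complex_Main
begin

definition states :: "nat \<Rightarrow> bool list set" where
  "states p = {xs. length xs = p}"

definition flip :: "bool list \<Rightarrow> nat \<Rightarrow> bool list" where
  "flip g i = g[i := \<not> g ! i]"

definition cond_prob :: "(bool list \<Rightarrow> real) \<Rightarrow> bool list \<Rightarrow> nat \<Rightarrow> real" where
  "cond_prob f g i = f g / (f g + f (flip g i))"

definition tgs_pi :: "(bool list \<Rightarrow> real) \<Rightarrow> bool list \<Rightarrow> nat \<Rightarrow> real" where
  "tgs_pi f g i = 1 / (2 * cond_prob f g i)"

definition tgs_Z :: "nat \<Rightarrow> (bool list \<Rightarrow> real) \<Rightarrow> bool list \<Rightarrow> real" where
  "tgs_Z p f g = (1 / real p) * (\<Sum>i<p. tgs_pi f g i)"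

definition tgs_P :: "nat \<Rightarrow> (bool list \<Rightarrow> real) \<Rightarrow> bool list \<Rightarrow> bool list \<Rightarrow> real" where
  "tgs_P p f g g' =
     (\<Sum>i\<in>{i. i < p \<and> flip g i = g'}. tgs_pi f g i / (\<Sum>j<p. tgs_pi f g j))"

definition tgs_Q :: "nat \<Rightarrow> (bool list \<Rightarrow> real) \<Rightarrow> bool list \<Rightarrow> bool list \<Rightarrow> real" where
  "tgs_Q p f g g' =
     (if g' \<noteq> g then tgs_Z p f g * tgs_P p f g g'
      else - (\<Sum>g''\<in>states p - {g}. tgs_Z p f g * tgs_P p f g g''))"

text \<open>Gap(Q): smallest non-zero eigenvalue of -Q (Q is reversible w.r.t. f, so its
  spectrum is real and real eigenvectors suffice).\<close>
definition eigenvalues_negQ :: "nat \<Rightarrow> (bool list \<Rightarrow> real) \<Rightarrow> real set" where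
  "eigenvalues_negQ p f = {lam. \<exists>v. (\<exists>x\<in>states p. v x \<noteq> 0) \<and>
       (\<forall>x\<in>states p. - (\<Sum>y\<in>states p. tgs_Q p f x y * v y) = lam * v x)}"

definition gap :: "nat \<Rightarrow> (bool list \<Rightarrow> real) \<Rightarrow> real" where
  "gap p f = Min (eigenvalues_negQ p f - {0})"

definition tgs_stat :: "nat \<Rightarrow> (bool list \<Rightarrow> real) \<Rightarrow> bool list \<Rightarrow> real" where
  "tgs_stat p f g = f g * tgs_Z p f g / (\<Sum>g'\<in>states p. f g' * tgs_Z p f g')"

definition path_prob :: "nat \<Rightarrow> (bool list \<Rightarrow> real) \<Rightarrow> bool list list \<Rightarrow> real" where
  "path_prob p f ps = tgs_stat p f (ps ! 0) *
      (\<Prod>t<length ps - 1. tgs_P p f (ps ! t) (ps ! Suc t))"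

definition paths :: "nat \<Rightarrow> nat \<Rightarrow> bool list list set" where
  "paths p n = {ps. length ps = n \<and> set ps \<subseteq> states p}"

definition path_expect :: "nat \<Rightarrow> (bool list \<Rightarrow> real) \<Rightarrow> nat \<Rightarrow> (bool list list \<Rightarrow> real) \<Rightarrow> real" where
  "path_expect p f n F = (\<Sum>ps\<in>paths p n. path_prob p f ps * F ps)"

definition tgs_est :: "nat \<Rightarrow> (bool list \<Rightarrow> real) \<Rightarrow> (bool list \<Rightarrow> real) \<Rightarrow> bool list list \<Rightarrow> real" where
  "tgs_est p f h ps =
     (\<Sum>t<length ps. h (ps ! t) / tgs_Z p f (ps ! t)) / (\<Sum>t<length ps. 1 / tgs_Z p f (ps ! t))"

definition tgs_est_var :: "nat \<Rightarrow> (bool list \<Rightarrow> real) \<Rightarrow> (bool list \<Rightarrow> real) \<Rightarrow> nat \<Rightarrow> real" where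
  "tgs_est_var p f h n =
     path_expect p f n (\<lambda>ps. (tgs_est p f h ps)\<^sup>2) - (path_expect p f n (tgs_est p f h))\<^sup>2"

definition tgs_asym_var :: "nat \<Rightarrow> (bool list \<Rightarrow> real) \<Rightarrow> (bool list \<Rightarrow> real) \<Rightarrow> real" where
  "tgs_asym_var p f h = lim (\<lambda>n. real n * tgs_est_var p f h n)"

definition var_f :: "nat \<Rightarrow> (bool list \<Rightarrow> real) \<Rightarrow> (bool list \<Rightarrow> real) \<Rightarrow> real" where
  "var_f p f h = (\<Sum>g\<in>states p. f g * (h g)\<^sup>2) - (\<Sum>g\<in>states p. f g * h g)\<^sup>2"

end

theory Submission
  imports Defs "HOL-Analysis.Analysis" "Jordan_Normal_Form.Jordan_Normal_Form"
begin


lemma finite_states: "finite (states p)"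
proof -
  have "states p = {xs. set xs \<subseteq> (UNIV::bool set) \<and> length xs = p}" by (auto simp: states_def)
  thus ?thesis using finite_lists_length_eq[of "UNIV::bool set" p] by simp
qed

lemma flip_in: "x \<in> states p \<Longrightarrow> flip x i \<in> states p"
  by (simp add: states_def flip_def)

lemma flip_flip: "i < length x \<Longrightarrow> flip (flip x i) i = x"
  by (simp add: flip_def)

lemma flip_neq: "i < length x \<Longrightarrow> flip x i \<noteq> x"
  unfolding flip_def by (metis nth_list_update_eq)

lemma bij_flip: "i < p \<Longrightarrow> bij_betw (\<lambda>x. flip x i) (states p) (states p)"
  apply (rule bij_betwI[where g="\<lambda>x. flip x i"])
  by (auto simp: flip_in flip_flip states_def flip_def)

lemma sum_flip: "i < p \<Longrightarrow> (\<Sum>x\<in>states p. F (flip x i)) = (\<Sum>x\<in>states p. F x)"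
  using sum.reindex_bij_betw[OF bij_flip[of i p], of F] by simp

locale tgs =
  fixes p :: nat and f :: "bool list \<Rightarrow> real"
  assumes p1: "1 \<le> p" and fpos: "\<And>g. g \<in> states p \<Longrightarrow> 0 < f g"
    and fsum: "(\<Sum>g\<in>states p. f g) = 1"
begin

abbreviation "SS \<equiv> states p"

lemma len: "x \<in> SS \<Longrightarrow> length x = p" by (simp add: states_def)

lemma pi_eq: "x \<in> SS \<Longrightarrow> i < p \<Longrightarrow> tgs_pi f x i = (f x + f (flip x i)) / (2 * f x)"
  using fpos[of x] fpos[OF flip_in[of x p i]]
  by (simp add: tgs_pi_def cond_prob_def field_simps)

lemma pi_pos: "x \<in> SS \<Longrightarrow> i < p \<Longrightarrow> 0 < tgs_pi f x i"
  using fpos[of x] fpos[OF flip_in[of x p i]] by (simp add: pi_eq)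

definition sp where "sp x = (\<Sum>j<p. tgs_pi f x j)"

lemma sp_pos: "x \<in> SS \<Longrightarrow> 0 < sp x"
  unfolding sp_def using p1 by (intro sum_pos) (auto intro: pi_pos simp: lessThan_empty_iff)

lemma Z_eq: "tgs_Z p f x = sp x / real p"
  by (simp add: tgs_Z_def sp_def)

lemma Z_pos: "x \<in> SS \<Longrightarrow> 0 < tgs_Z p f x"
  using sp_pos p1 by (simp add: Z_eq)

lemma P_nonneg: "x \<in> SS \<Longrightarrow> 0 \<le> tgs_P p f x y"
  unfolding tgs_P_def using sp_pos[of x] pi_pos[of x]
  by (intro sum_nonneg) (auto simp: sp_def[symmetric] intro!: divide_nonneg_pos less_imp_le)

lemma KS: assumes "x \<in> SS"
  shows "(\<Sum>y\<in>SS. tgs_P p f x y * G y) = (\<Sum>i<p. tgs_pi f x i * G (flip x i)) / sp x"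
proof -
  have "(\<Sum>y\<in>SS. tgs_P p f x y * G y)
      = (\<Sum>y\<in>SS. \<Sum>i\<in>{i. i < p \<and> flip x i = y}. tgs_pi f x i / sp x * G y)"
    unfolding tgs_P_def sp_def[symmetric] by (simp add: sum_distrib_right)
  also have "\<dots> = (\<Sum>y\<in>SS. \<Sum>i\<in>{..<p}. if flip x i = y then tgs_pi f x i / sp x * G (flip x i) else 0)"
  proof (rule sum.cong[OF refl])
    fix y assume "y \<in> SS"
    have e: "{i. i < p \<and> flip x i = y} = {i\<in>{..<p}. flip x i = y}" by auto
    show "(\<Sum>i\<in>{i. i < p \<and> flip x i = y}. tgs_pi f x i / sp x * G y) = (\<Sum>i\<in>{..<p}. if flip x i = y then tgs_pi f x i / sp x * G (flip x i) else 0)"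
      unfolding e by (subst sum.inter_filter) (auto intro!: sum.cong)
  qed
  also have "\<dots> = (\<Sum>i\<in>{..<p}. \<Sum>y\<in>SS. if flip x i = y then tgs_pi f x i / sp x * G (flip x i) else 0)"
    by (rule sum.swap)
  also have "\<dots> = (\<Sum>i\<in>{..<p}. tgs_pi f x i / sp x * G (flip x i))"
    using assms finite_states flip_in by (intro sum.cong refl) (simp add: sum.delta)
  finally show ?thesis by (simp add: sum_divide_distrib)
qed


lemma fpi: "x \<in> SS \<Longrightarrow> i < p \<Longrightarrow> f x * tgs_pi f x i = (f x + f (flip x i)) / 2"
  using fpos[of x] by (simp add: pi_eq)

lemma ZP: assumes "x \<in> SS"
  shows "tgs_Z p f x * (\<Sum>y\<in>SS. tgs_P p f x y * G y) = (\<Sum>i<p. tgs_pi f x i * G (flip x i)) / real p"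
  using sp_pos[OF assms] by (simp add: KS[OF assms] Z_eq)

lemma stoch: assumes "x \<in> SS" shows "(\<Sum>y\<in>SS. tgs_P p f x y) = 1"
  using KS[OF assms, of "\<lambda>_. 1"] sp_pos[OF assms] by (simp add: sp_def)

lemma P_self: assumes "x \<in> SS" shows "tgs_P p f x x = 0"
proof -
  have e: "{i. i < p \<and> flip x i = x} = {}" using flip_neq len[OF assms] by auto
  show ?thesis unfolding tgs_P_def e by simp
qed

lemma fZ: assumes "x \<in> SS"
  shows "f x * tgs_Z p f x = (\<Sum>i<p. (f x + f (flip x i))) / (2 * real p)"
proof -
  have "f x * tgs_Z p f x = (\<Sum>i<p. f x * tgs_pi f x i) / real p"
    by (simp add: tgs_Z_def sum_distrib_left sum_divide_distrib)
  also have "\<dots> = (\<Sum>i<p. (f x + f (flip x i)) / 2) / real p"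
    using assms by (simp add: fpi)
  finally show ?thesis by (simp add: sum_divide_distrib[symmetric])
qed

lemma fZP: assumes "x \<in> SS"
  shows "f x * tgs_Z p f x * (\<Sum>y\<in>SS. tgs_P p f x y * G y)
       = (\<Sum>i<p. (f x + f (flip x i)) * G (flip x i)) / (2 * real p)"
proof -
  have "f x * tgs_Z p f x * (\<Sum>y\<in>SS. tgs_P p f x y * G y) = (\<Sum>i<p. f x * tgs_pi f x i * G (flip x i)) / real p"
    by (simp only: mult.assoc ZP[OF assms]) (simp add: sum_distrib_left mult.assoc)
  also have "\<dots> = (\<Sum>i<p. (f x + f (flip x i)) / 2 * G (flip x i)) / real p"
    using assms by (simp add: fpi)
  finally show ?thesis by (simp add: sum_divide_distrib[symmetric])
qed

lemma stationary:
  "(\<Sum>x\<in>SS. f x * tgs_Z p f x * (\<Sum>y\<in>SS. tgs_P p f x y * G y)) = (\<Sum>x\<in>SS. f x * tgs_Z p f x * G x)"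
proof -
  have "(\<Sum>x\<in>SS. f x * tgs_Z p f x * (\<Sum>y\<in>SS. tgs_P p f x y * G y))
      = (\<Sum>x\<in>SS. \<Sum>i<p. (f x + f (flip x i)) * G (flip x i)) / (2 * real p)"
    by (simp add: fZP sum_divide_distrib)
  also have "\<dots> = (\<Sum>i<p. \<Sum>x\<in>SS. (f x + f (flip x i)) * G (flip x i)) / (2 * real p)"
    by (subst sum.swap) simp
  also have "\<dots> = (\<Sum>i<p. \<Sum>x\<in>SS. (f (flip x i) + f x) * G x) / (2 * real p)"
  proof -
    have "(\<Sum>x\<in>SS. (f x + f (flip x i)) * G (flip x i)) = (\<Sum>x\<in>SS. (f (flip x i) + f x) * G x)" if "i < p" for i
    proof -
      have "(\<Sum>x\<in>SS. (f x + f (flip x i)) * G (flip x i)) = (\<Sum>x\<in>SS. (f (flip (flip x i) i) + f (flip x i)) * G (flip x i))"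
        by (intro sum.cong refl) (simp add: flip_flip len that)
      also have "\<dots> = (\<Sum>x\<in>SS. (f (flip x i) + f x) * G x)"
        by (rule sum_flip[OF that, where F="\<lambda>y. (f (flip y i) + f y) * G y"])
      finally show ?thesis .
    qed
    hence "(\<Sum>i<p. \<Sum>x\<in>SS. (f x + f (flip x i)) * G (flip x i)) = (\<Sum>i<p. \<Sum>x\<in>SS. (f (flip x i) + f x) * G x)"
      by (rule sum.cong[OF refl]) auto
    thus ?thesis by simp
  qed
  also have "\<dots> = (\<Sum>x\<in>SS. \<Sum>i<p. (f x + f (flip x i)) * G x) / (2 * real p)"
    by (subst sum.swap) (simp add: add.commute)
  also have "\<dots> = (\<Sum>x\<in>SS. f x * tgs_Z p f x * G x)"
    by (simp add: fZ sum_divide_distrib sum_distrib_right)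
  finally show ?thesis .
qed

lemma sum_fZ: "(\<Sum>x\<in>SS. f x * tgs_Z p f x) = 1"
proof -
  have "(\<Sum>x\<in>SS. f x * tgs_Z p f x) = (\<Sum>x\<in>SS. f x * tgs_Z p f x * (\<Sum>y\<in>SS. tgs_P p f x y * 1))"
    by (simp add: stoch)
  also have "\<dots> = (\<Sum>x\<in>SS. (\<Sum>i<p. (f x + f (flip x i))) / (2 * real p))"
    using fZP[where G="\<lambda>_. 1"] by simp
  also have "\<dots> = (\<Sum>i<p. \<Sum>x\<in>SS. (f x + f (flip x i))) / (2 * real p)"
    by (simp add: sum_divide_distrib[symmetric]) (subst sum.swap, simp)
  also have "\<dots> = (\<Sum>i<p. (2::real)) / (2 * real p)"
    by (intro arg_cong[where f="\<lambda>t. t / _"] sum.cong refl)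
       (simp add: sum.distrib sum_flip[where F=f] fsum)
  also have "\<dots> = 1" using p1 by simp
  finally show ?thesis .
qed

lemma stat_eq: "tgs_stat p f x = f x * tgs_Z p f x"
  by (simp add: tgs_stat_def sum_fZ)

definition Pop :: "(bool list \<Rightarrow> real) \<Rightarrow> bool list \<Rightarrow> real" where
  "Pop G x = (\<Sum>y\<in>SS. tgs_P p f x y * G y)"

definition Lop :: "(bool list \<Rightarrow> real) \<Rightarrow> bool list \<Rightarrow> real" where
  "Lop v x = tgs_Z p f x * (v x - Pop v x)"

definition cc :: "nat \<Rightarrow> bool list \<Rightarrow> real" where
  "cc i x = (f x + f (flip x i)) / 2"

lemma negQ: assumes "x \<in> SS" shows "- (\<Sum>y\<in>SS. tgs_Q p f x y * v y) = Lop v x"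
proof -
  have fin: "finite SS" by (rule finite_states)
  have s1: "(\<Sum>y\<in>SS - {x}. tgs_P p f x y * v y) = Pop v x"
    using sum.remove[OF fin assms, of "\<lambda>y. tgs_P p f x y * v y"] P_self[OF assms]
    by (simp add: Pop_def)
  have s2: "(\<Sum>y\<in>SS - {x}. tgs_P p f x y) = 1"
    using sum.remove[OF fin assms, of "\<lambda>y. tgs_P p f x y"] P_self[OF assms] stoch[OF assms]
    by simp
  have "(\<Sum>y\<in>SS. tgs_Q p f x y * v y) = tgs_Q p f x x * v x + (\<Sum>y\<in>SS - {x}. tgs_Q p f x y * v y)"
    by (rule sum.remove[OF fin assms])
  also have "(\<Sum>y\<in>SS - {x}. tgs_Q p f x y * v y) = (\<Sum>y\<in>SS - {x}. tgs_Z p f x * (tgs_P p f x y * v y))"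
    by (intro sum.cong refl) (auto simp: tgs_Q_def)
  also have "tgs_Q p f x x = - tgs_Z p f x"
    using s2 by (simp add: tgs_Q_def sum_distrib_left[symmetric])
  also have "(\<Sum>y\<in>SS - {x}. tgs_Z p f x * (tgs_P p f x y * v y)) = tgs_Z p f x * Pop v x"
    by (simp only: sum_distrib_left[symmetric] s1)
  finally show ?thesis by (simp add: Lop_def algebra_simps)
qed

lemma fLop: assumes "x \<in> SS"
  shows "f x * Lop v x = (\<Sum>i<p. cc i x * (v x - v (flip x i))) / real p"
proof -
  have "f x * Lop v x = f x * tgs_Z p f x * v x - f x * tgs_Z p f x * Pop v x"
    by (simp add: Lop_def algebra_simps)
  also have "\<dots> = (\<Sum>i<p. (f x + f (flip x i)) * v x) / (2 * real p) - (\<Sum>i<p. (f x + f (flip x i)) * v (flip x i)) / (2 * real p)"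
  proof -
    have a: "f x * tgs_Z p f x * v x = (\<Sum>i<p. (f x + f (flip x i)) * v x) / (2 * real p)"
      by (simp add: fZ[OF assms] sum_distrib_right)
    have b: "f x * tgs_Z p f x * Pop v x = (\<Sum>i<p. (f x + f (flip x i)) * v (flip x i)) / (2 * real p)"
      unfolding Pop_def by (rule fZP[OF assms])
    show ?thesis by (simp only: a b)
  qed
  also have "\<dots> = (\<Sum>i<p. cc i x * (v x - v (flip x i))) / real p"
    by (simp add: cc_def diff_divide_distrib[symmetric] sum_subtractf[symmetric] sum_divide_distrib[symmetric] algebra_simps)
  finally show ?thesis .
qed

lemma cc_flip: "x \<in> SS \<Longrightarrow> i < p \<Longrightarrow> cc i (flip x i) = cc i x"
  by (simp add: cc_def flip_flip len)

lemma cc_pos: "x \<in> SS \<Longrightarrow> i < p \<Longrightarrow> 0 < cc i x"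
  using fpos[of x] fpos[OF flip_in[of x p i]] by (simp add: cc_def)

lemma dirichlet:
  "(\<Sum>x\<in>SS. w x * (f x * Lop v x))
   = (\<Sum>i<p. \<Sum>x\<in>SS. cc i x * (w x - w (flip x i)) * (v x - v (flip x i))) / (2 * real p)"
proof -
  have A: "2 * (\<Sum>x\<in>SS. cc i x * w x * (v x - v (flip x i)))
        = (\<Sum>x\<in>SS. cc i x * (w x - w (flip x i)) * (v x - v (flip x i)))" if i: "i < p" for i
  proof -
    have "(\<Sum>x\<in>SS. cc i x * w x * (v x - v (flip x i)))
        = (\<Sum>x\<in>SS. cc i (flip x i) * w (flip x i) * (v (flip x i) - v (flip (flip x i) i)))"
      by (rule sum_flip[OF i, where F="\<lambda>y. cc i y * w y * (v y - v (flip y i))", symmetric])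
    also have "\<dots> = (\<Sum>x\<in>SS. cc i x * w (flip x i) * (v (flip x i) - v x))"
      by (intro sum.cong refl) (simp add: cc_flip flip_flip len i)
    finally have "2 * (\<Sum>x\<in>SS. cc i x * w x * (v x - v (flip x i)))
       = (\<Sum>x\<in>SS. cc i x * w x * (v x - v (flip x i))) + (\<Sum>x\<in>SS. cc i x * w (flip x i) * (v (flip x i) - v x))"
      by simp
    also have "\<dots> = (\<Sum>x\<in>SS. cc i x * (w x - w (flip x i)) * (v x - v (flip x i)))"
      by (simp add: sum.distrib[symmetric] algebra_simps)
    finally show ?thesis .
  qed
  have "(\<Sum>x\<in>SS. w x * (f x * Lop v x)) = (\<Sum>x\<in>SS. \<Sum>i<p. cc i x * w x * (v x - v (flip x i))) / real p"
    by (simp add: fLop sum_divide_distrib sum_distrib_left algebra_simps)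
  also have "\<dots> = (\<Sum>i<p. \<Sum>x\<in>SS. cc i x * w x * (v x - v (flip x i))) / real p"
    by (subst sum.swap) simp
  also have "\<dots> = (\<Sum>i<p. 2 * (\<Sum>x\<in>SS. cc i x * w x * (v x - v (flip x i)))) / (2 * real p)"
    by (simp add: sum_distrib_left[symmetric])
  also have "\<dots> = (\<Sum>i<p. \<Sum>x\<in>SS. cc i x * (w x - w (flip x i)) * (v x - v (flip x i))) / (2 * real p)"
    by (simp add: A)
  finally show ?thesis .
qed

end


lemma box_compact: "compact {v::'a\<Rightarrow>real. \<forall>x. v x \<in> (if x \<in> S then {-b x..b x} else {0})}"
proof -
  have e: "{v::'a\<Rightarrow>real. \<forall>x. v x \<in> (if x \<in> S then {-b x..b x} else {0})} = PiE UNIV (\<lambda>x. if x \<in> S then {-b x..b x} else {0})"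
    by (auto simp: PiE_def extensional_def Pi_def)
  have "compactin (product_topology (\<lambda>_. euclidean) UNIV) (PiE UNIV (\<lambda>x. if x \<in> S then {-b x..b x} else {0::real}))"
    by (subst compactin_PiE) auto
  thus ?thesis unfolding e euclidean_product_topology by simp
qed

lemma cont_test: "continuous_on UNIV (\<lambda>v::bool list \<Rightarrow> real. \<Sum>x\<in>A. c x * v x * (v x - (\<Sum>y\<in>B. d x y * v y)))"
  by (intro continuous_intros continuous_on_product_coordinates)

lemma connected_const:
  assumes H: "\<And>x i. length x = n \<Longrightarrow> i < n \<Longrightarrow> v x = v (flip x i)"
  shows "length x = n \<Longrightarrow> length y = n \<Longrightarrow> v x = v y"
proof (induction "card {i. i < n \<and> x!i \<noteq> y!i}" arbitrary: x rule: less_induct)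
  case less
  show ?case
  proof (cases "{i. i < n \<and> x!i \<noteq> y!i} = {}")
    case True
    hence "x = y" using less.prems by (intro nth_equalityI) auto
    thus ?thesis by simp
  next
    case False
    then obtain i where i: "i < n" "x!i \<noteq> y!i" by auto
    have e: "{j. j < n \<and> flip x i ! j \<noteq> y!j} = {j. j < n \<and> x!j \<noteq> y!j} - {i}"
      using i less.prems by (auto simp: flip_def nth_list_update)
    have "card {j. j < n \<and> flip x i ! j \<noteq> y!j} < card {j. j < n \<and> x!j \<noteq> y!j}"
      unfolding e using i by (intro card_Diff1_less) auto
    hence "v (flip x i) = v y" using less.prems by (intro less.hyps) (auto simp: flip_def)
    thus ?thesis using H[OF less.prems(1) i(1)] by simp
  qed
qed


lemma quad_zero:
  fixes a b :: real
  assumes "\<And>t. 0 \<le> a * t + b * t^2"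
  shows "a = 0"
proof (rule ccontr)
  assume a: "a \<noteq> 0"
  define B where "B = \<bar>b\<bar> + 1"
  have d: "0 < B" "\<bar>b\<bar> \<le> B" by (auto simp: B_def)
  define t where "t = - a / (2 * B)"
  have "a * t + b * t^2 \<le> a * t + B * t^2"
    using d by (intro add_left_mono mult_right_mono) auto
  also have "\<dots> = - (a * a) / (4 * B)"
    using d by (simp add: t_def power2_eq_square field_simps)
  also have "\<dots> < 0"
  proof -
    have "0 < a * a" using a by (cases "a > 0") (auto simp: mult_neg_neg)
    thus ?thesis using d by (simp add: field_simps)
  qed
  finally show False using assms[of t] by simp
qed

context tgs
begin

definition form :: "(bool list \<Rightarrow> real) \<Rightarrow> (bool list \<Rightarrow> real) \<Rightarrow> real" where
  "form v w = (\<Sum>x\<in>SS. w x * (f x * Lop v x))"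

definition nrm :: "(bool list \<Rightarrow> real) \<Rightarrow> real" where
  "nrm v = (\<Sum>x\<in>SS. f x * (v x)^2)"

definition ip :: "(bool list \<Rightarrow> real) \<Rightarrow> (bool list \<Rightarrow> real) \<Rightarrow> real" where
  "ip v w = (\<Sum>x\<in>SS. f x * v x * w x)"

definition mean :: "(bool list \<Rightarrow> real) \<Rightarrow> real" where
  "mean v = (\<Sum>x\<in>SS. f x * v x)"

lemma form_dir: "form v w = (\<Sum>i<p. \<Sum>x\<in>SS. cc i x * (w x - w (flip x i)) * (v x - v (flip x i))) / (2 * real p)"
  unfolding form_def by (rule dirichlet)

lemma form_sym: "form v w = form w v"
  unfolding form_dir by (simp add: algebra_simps)

lemma form_nonneg: "0 \<le> form v v"
  unfolding form_dir
  by (auto intro!: sum_nonneg divide_nonneg_nonneg mult_nonneg_nonneg[OF less_imp_le[OF cc_pos] zero_le_square] simp: mult.assoc)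

lemma Pop_lin: "Pop (\<lambda>x. a * v x + b * w x) x = a * Pop v x + b * Pop w x"
  by (simp add: Pop_def sum.distrib sum_distrib_left algebra_simps)

lemma Lop_lin: "Lop (\<lambda>x. a * v x + b * w x) x = a * Lop v x + b * Lop w x"
  by (simp add: Lop_def Pop_lin algebra_simps)

lemma Pop_cong: "(\<And>x. x \<in> SS \<Longrightarrow> v x = w x) \<Longrightarrow> Pop v y = Pop w y"
  by (simp add: Pop_def)

lemma Lop_cong: "(\<And>x. x \<in> SS \<Longrightarrow> v x = w x) \<Longrightarrow> y \<in> SS \<Longrightarrow> Lop v y = Lop w y"
  by (simp add: Lop_def Pop_cong[of v w])

lemma form_cong: "(\<And>x. x \<in> SS \<Longrightarrow> v x = v' x) \<Longrightarrow> (\<And>x. x \<in> SS \<Longrightarrow> w x = w' x) \<Longrightarrow> form v w = form v' w'"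
  unfolding form_def by (intro sum.cong refl) (simp add: Lop_cong[of v v'])

lemma Pop_const: "x \<in> SS \<Longrightarrow> Pop (\<lambda>_. c) x = c"
  by (simp add: Pop_def sum_distrib_right[symmetric] stoch)

lemma Lop_const: "x \<in> SS \<Longrightarrow> Lop (\<lambda>_. c) x = 0"
  by (simp add: Lop_def Pop_const)

lemma form_lin1: "form (\<lambda>x. a * v x + b * w x) u = a * form v u + b * form w u"
  by (simp add: form_def Lop_lin sum.distrib sum_distrib_left algebra_simps)

lemma form_lin2: "form u (\<lambda>x. a * v x + b * w x) = a * form u v + b * form u w"
  by (simp add: form_def sum.distrib sum_distrib_left algebra_simps)

lemma mean_Lop: "mean (Lop v) = 0"
proof -
  have "form v (\<lambda>_. 1) = 0" unfolding form_dir by simp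
  thus ?thesis by (simp add: form_def mean_def)
qed

lemma form_quad: "form (\<lambda>x. v x + t * w x) (\<lambda>x. v x + t * w x) = form v v + 2 * t * form v w + t^2 * form w w"
proof -
  have "form (\<lambda>x. v x + t * w x) (\<lambda>x. v x + t * w x) = form (\<lambda>x. 1 * v x + t * w x) (\<lambda>x. 1 * v x + t * w x)"
    by simp
  also have "\<dots> = form v v + t * form v w + t * (form w v + t * form w w)"
    by (simp only: form_lin1 form_lin2) simp
  finally show ?thesis by (simp add: form_sym[of w v] power2_eq_square algebra_simps)
qed

lemma nrm_quad: "nrm (\<lambda>x. v x + t * w x) = nrm v + 2 * t * ip v w + t^2 * nrm w"
  by (simp add: nrm_def ip_def power2_eq_square sum.distrib sum_distrib_left algebra_simps)

lemma mean_lin: "mean (\<lambda>x. a * v x + b * w x) = a * mean v + b * mean w"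
  by (simp add: mean_def sum.distrib sum_distrib_left algebra_simps)

lemma nrm_nonneg: "0 \<le> nrm v"
  unfolding nrm_def by (intro sum_nonneg) (simp add: less_imp_le[OF fpos])

lemma nrm_zero: assumes "nrm v = 0" "x \<in> SS" shows "v x = 0"
proof -
  have "\<forall>x\<in>SS. f x * (v x)^2 = 0" using assms(1) unfolding nrm_def
    by (subst (asm) sum_nonneg_eq_0_iff) (auto simp: finite_states less_imp_le[OF fpos])
  thus ?thesis using assms(2) fpos[OF assms(2)] by auto
qed

lemma form_zero: assumes "form v v = 0" "x \<in> SS" "y \<in> SS" shows "v x = v y"
proof -
  have "(\<Sum>i<p. \<Sum>x\<in>SS. cc i x * (v x - v (flip x i)) * (v x - v (flip x i))) = 0"
    using assms(1) p1 unfolding form_dir by simp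
  hence "\<forall>i\<in>{..<p}. (\<Sum>x\<in>SS. cc i x * (v x - v (flip x i)) * (v x - v (flip x i))) = 0"
    by (subst (asm) sum_nonneg_eq_0_iff)
       (auto intro!: sum_nonneg mult_nonneg_nonneg[OF less_imp_le[OF cc_pos] zero_le_square] simp: mult.assoc)
  note A = this
  have H: "cc i x * (v x - v (flip x i)) * (v x - v (flip x i)) = 0" if "i < p" "x \<in> SS" for i x
  proof -
    have "(\<Sum>x\<in>SS. cc i x * (v x - v (flip x i)) * (v x - v (flip x i))) = 0" using A that(1) by auto
    hence "\<forall>x\<in>SS. cc i x * (v x - v (flip x i)) * (v x - v (flip x i)) = 0"
      by (subst (asm) sum_nonneg_eq_0_iff)
         (auto intro!: mult_nonneg_nonneg[OF less_imp_le[OF cc_pos] zero_le_square] simp: finite_states mult.assoc that(1))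
    thus ?thesis using that(2) by auto
  qed
  have "v x = v (flip x i)" if "length x = p" "i < p" for x i
  proof -
    have x: "x \<in> SS" using that by (simp add: states_def)
    from H[OF that(2) x] cc_pos[OF x that(2)] show ?thesis by simp
  qed
  thus ?thesis using connected_const[of p v x y] assms(2,3) by (simp add: states_def)
qed


lemma form_scale1: "form (\<lambda>x. c * v x) u = c * form v u"
  using form_lin1[of c v 0 v u] by simp

lemma form_scale2: "form u (\<lambda>x. c * v x) = c * form u v"
  using form_lin2[of u c v 0 v] by simp

lemma nrm_cong: "(\<And>x. x \<in> SS \<Longrightarrow> v x = w x) \<Longrightarrow> nrm v = nrm w"
  by (simp add: nrm_def)

lemma mean_cong: "(\<And>x. x \<in> SS \<Longrightarrow> v x = w x) \<Longrightarrow> mean v = mean w"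
  by (simp add: mean_def)

lemma cont_form: "continuous_on UNIV (\<lambda>v. form v v)"
  unfolding form_def Lop_def Pop_def
  by (intro continuous_intros continuous_on_product_coordinates)

lemma cont_mean: "continuous_on UNIV (\<lambda>v. mean v)"
  unfolding mean_def
  by (intro continuous_intros continuous_on_product_coordinates)

lemma cont_nrm: "continuous_on UNIV (\<lambda>v. nrm v)"
  unfolding nrm_def
  by (intro continuous_intros continuous_on_product_coordinates)

lemma single_le_nrm: "x \<in> SS \<Longrightarrow> f x * (v x)^2 \<le> nrm v"
  unfolding nrm_def
  by (rule member_le_sum[where f="\<lambda>x. f x * (v x)^2"]) (auto simp: finite_states less_imp_le[OF fpos])

lemma box_bound:
  assumes "x \<in> SS" "nrm v \<le> R"
  shows "v x \<in> {- sqrt (R / f x) .. sqrt (R / f x)}"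
proof -
  have "f x * (v x)^2 \<le> R" using single_le_nrm[OF assms(1), of v] assms(2) by simp
  hence "(v x)^2 \<le> R / f x" using fpos[OF assms(1)] by (simp add: field_simps)
  hence "sqrt ((v x)^2) \<le> sqrt (R / f x)" by (rule real_sqrt_le_mono)
  thus ?thesis by (simp add: abs_le_iff)
qed

lemma exists_test: "\<exists>w. mean w = 0 \<and> 0 < nrm w"
proof -
  define x0 where "x0 = replicate p False"
  define x1 where "x1 = flip x0 0"
  have x0: "x0 \<in> SS" by (simp add: x0_def states_def)
  have x1: "x1 \<in> SS" by (simp add: x1_def flip_in x0)
  have ne: "x1 \<noteq> x0" unfolding x1_def using flip_neq[of 0 x0] p1 x0 len by auto
  define w where "w x = (if x = x0 then 1 / f x0 else 0) - (if x = x1 then 1 / f x1 else 0)" for x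
  have fw: "f x * w x = (if x = x0 then 1 else 0) - (if x = x1 then 1 else 0)" if "x \<in> SS" for x
    using ne fpos[OF x0] fpos[OF x1] by (auto simp: w_def)
  have "mean w = (\<Sum>x\<in>SS. (if x = x0 then 1 else 0) - (if x = x1 then 1 else 0))"
    unfolding mean_def by (rule sum.cong) (simp_all add: fw)
  also have "\<dots> = 0" using x0 x1 by (simp add: sum_subtractf finite_states)
  finally have m: "mean w = 0" .
  have "0 < f x0 * (w x0)^2" using fpos[OF x0] ne by (simp add: w_def)
  also have "\<dots> \<le> nrm w" by (rule single_le_nrm[OF x0])
  finally show ?thesis using m by blast
qed

lemma rayleigh:
  obtains v0 where "mean v0 = 0" "nrm v0 = 1" "\<And>w. mean w = 0 \<Longrightarrow> form v0 v0 * nrm w \<le> form w w"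
proof -
  define C where "C = {v. \<forall>x. v x \<in> (if x \<in> SS then {- sqrt (1 / f x) .. sqrt (1 / f x)} else {0})}
     \<inter> {v. mean v = 0} \<inter> {v. nrm v = 1}"
  have cC: "compact C" unfolding C_def
    by (intro compact_Int_closed box_compact closed_Collect_eq cont_mean cont_nrm continuous_on_const)
  define nz where "nz w = (\<lambda>x. if x \<in> SS then w x / sqrt (nrm w) else 0)" for w
  have nzC: "nz w \<in> C" and nzF: "form (nz w) (nz w) = form w w / nrm w"
    if w: "mean w = 0" "0 < nrm w" for w
  proof -
    have e: "x \<in> SS \<Longrightarrow> nz w x = (1 / sqrt (nrm w)) * w x" for x by (simp add: nz_def)
    have n1: "nrm (nz w) = 1"
    proof -
      have "nrm (nz w) = nrm (\<lambda>x. (1 / sqrt (nrm w)) * w x)" by (rule nrm_cong) (simp add: e)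
      also have "\<dots> = nrm w / nrm w" using w(2)
        by (simp add: nrm_def power_mult_distrib sum_divide_distrib[symmetric] power_divide field_simps)
      finally show ?thesis using w(2) by simp
    qed
    have "mean (nz w) = mean (\<lambda>x. (1 / sqrt (nrm w)) * w x)" by (rule mean_cong) (simp add: e)
    also have "\<dots> = 0" using w(1) by (simp add: mean_def sum_divide_distrib[symmetric])
    finally have m0: "mean (nz w) = 0" .
    show "nz w \<in> C" unfolding C_def using box_bound[of _ "nz w" 1] n1 m0 by (auto simp: nz_def)
    have "form (nz w) (nz w) = form (\<lambda>x. (1 / sqrt (nrm w)) * w x) (\<lambda>x. (1 / sqrt (nrm w)) * w x)"
      by (rule form_cong) (simp_all add: e)
    also have "\<dots> = (1 / sqrt (nrm w)) * ((1 / sqrt (nrm w)) * form w w)"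
      by (simp only: form_scale1 form_scale2)
    also have "\<dots> = form w w / (sqrt (nrm w) * sqrt (nrm w))" by simp
    also have "sqrt (nrm w) * sqrt (nrm w) = nrm w" using w(2) by simp
    finally show "form (nz w) (nz w) = form w w / nrm w" .
  qed
  obtain w0 where "mean w0 = 0" "0 < nrm w0" using exists_test by blast
  hence Cne: "C \<noteq> {}" using nzC by blast
  obtain v0 where v0: "v0 \<in> C" and vmin: "\<And>v. v \<in> C \<Longrightarrow> form v0 v0 \<le> form v v"
    using continuous_attains_inf[OF cC Cne continuous_on_subset[OF cont_form]] by blast
  show ?thesis
  proof
    show "mean v0 = 0" "nrm v0 = 1" using v0 by (auto simp: C_def)
    fix w assume w: "mean w = 0"
    show "form v0 v0 * nrm w \<le> form w w"
    proof (cases "nrm w = 0")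
      case True thus ?thesis using form_nonneg[of w] by simp
    next
      case False
      hence pos: "0 < nrm w" using nrm_nonneg[of w] by simp
      have "form v0 v0 \<le> form w w / nrm w" using vmin[OF nzC[OF w pos]] nzF[OF w pos] by simp
      thus ?thesis using pos by (simp add: field_simps)
    qed
  qed
qed

end


context tgs
begin

lemma mean_add: "mean (\<lambda>x. v x + t * w x) = mean v + t * mean w"
  by (simp add: mean_def sum.distrib sum_distrib_left algebra_simps)

lemma ip_add: "ip k (\<lambda>x. v x + t * w x) = ip k v + t * ip k w"
  by (simp add: ip_def sum.distrib sum_distrib_left algebra_simps)

lemma nrm_diff: "nrm (\<lambda>x. a x - b x) = nrm a - 2 * ip a b + nrm b"
  by (simp add: nrm_def ip_def power2_eq_square sum.distrib sum_subtractf sum_distrib_left algebra_simps)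

lemma ip_sym: "ip a b = ip b a"
  by (simp add: ip_def algebra_simps)

lemma cs_ip: assumes "0 < e" shows "2 * ip k u \<le> e * nrm u + nrm k / e"
proof -
  have "0 \<le> nrm (\<lambda>x. e * u x - k x)" by (rule nrm_nonneg)
  also have "nrm (\<lambda>x. e * u x - k x) = e^2 * nrm u - 2 * e * ip k u + nrm k"
    by (simp add: nrm_diff) (simp add: nrm_def ip_def power2_eq_square sum_distrib_left algebra_simps)
  finally have "2 * e * ip k u \<le> e^2 * nrm u + nrm k" by simp
  hence "2 * ip k u \<le> (e^2 * nrm u + nrm k) / e"
    by (subst pos_le_divide_eq[OF assms]) (simp add: algebra_simps)
  also have "\<dots> = e * nrm u + nrm k / e" using assms by (simp add: power2_eq_square add_divide_distrib)
  finally show ?thesis .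
qed

lemma nrm_eq0_cong: "nrm v = 0 \<Longrightarrow> nrm v' = nrm (\<lambda>x. v' x + v x)"
  by (rule nrm_cong) (simp add: nrm_zero)

lemma eig:
  obtains lam where "0 < lam" "lam \<in> eigenvalues_negQ p f"
    "\<And>w. mean w = 0 \<Longrightarrow> lam * nrm w \<le> form w w"
    "\<And>l. l \<in> eigenvalues_negQ p f \<Longrightarrow> l \<noteq> 0 \<Longrightarrow> lam \<le> l"
proof -
  obtain v0 where m0: "mean v0 = 0" and n1: "nrm v0 = 1"
    and mn: "\<And>w. mean w = 0 \<Longrightarrow> form v0 v0 * nrm w \<le> form w w"
    using rayleigh by blast
  define lam where "lam = form v0 v0"
  have crit: "form v0 w = lam * ip v0 w" if w: "mean w = 0" for w
  proof -
    have "0 \<le> (2 * form v0 w - 2 * lam * ip v0 w) * t + (form w w - lam * nrm w) * t^2" for t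
    proof -
      have "mean (\<lambda>x. v0 x + t * w x) = 0" using m0 w by (simp add: mean_add)
      from mn[OF this] have "lam * nrm (\<lambda>x. v0 x + t * w x) \<le> form (\<lambda>x. v0 x + t * w x) (\<lambda>x. v0 x + t * w x)"
        by (simp add: lam_def)
      thus ?thesis by (simp add: nrm_quad form_quad n1 lam_def algebra_simps)
    qed
    from quad_zero[OF this] show ?thesis by simp
  qed
  define r where "r x = Lop v0 x - lam * v0 x" for x
  have "mean r = mean (Lop v0) - lam * mean v0"
    by (simp add: mean_def r_def right_diff_distrib sum_subtractf sum_distrib_left mult.left_commute)
  hence "mean r = 0" using mean_Lop[of v0] m0 by simp
  from crit[OF this] have "form v0 r - lam * ip v0 r = 0" by simp
  moreover have "form v0 r - lam * ip v0 r = nrm r"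
  proof -
    have "form v0 r - lam * ip v0 r = (\<Sum>x\<in>SS. r x * (f x * Lop v0 x) - lam * (f x * v0 x * r x))"
      by (simp add: form_def ip_def sum_subtractf sum_distrib_left)
    also have "\<dots> = (\<Sum>x\<in>SS. f x * (r x)^2)"
      by (rule sum.cong) (simp_all add: r_def power2_eq_square algebra_simps)
    finally show ?thesis by (simp add: nrm_def)
  qed
  ultimately have r0: "\<And>x. x \<in> SS \<Longrightarrow> Lop v0 x = lam * v0 x" using nrm_zero[of r] by (simp add: r_def)
  have nz: "\<exists>x\<in>SS. v0 x \<noteq> 0"
  proof (rule ccontr)
    assume "\<not> ?thesis"
    hence "nrm v0 = nrm (\<lambda>_. 0)" by (intro nrm_cong) auto
    thus False using n1 by (simp add: nrm_def)
  qed
  have lpos: "0 < lam"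
  proof -
    have "0 \<le> lam" using form_nonneg by (simp add: lam_def)
    moreover have "lam \<noteq> 0"
    proof
      assume "lam = 0"
      then obtain x where x: "x \<in> SS" "v0 x \<noteq> 0" using nz by blast
      have f0: "form v0 v0 = 0" using \<open>lam = 0\<close> by (simp add: lam_def)
      have "\<And>y. y \<in> SS \<Longrightarrow> v0 y = v0 x" by (rule form_zero[OF f0 _ x(1)])
      hence "mean v0 = (\<Sum>y\<in>SS. f y) * v0 x" by (simp add: mean_def sum_distrib_right)
      thus False using m0 fsum x(2) by simp
    qed
    ultimately show ?thesis by simp
  qed
  show ?thesis
  proof
    show "0 < lam" by (rule lpos)
    show "lam \<in> eigenvalues_negQ p f"
      unfolding eigenvalues_negQ_def mem_Collect_eq
      by (rule exI[of _ v0]) (simp add: nz r0 negQ)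
    show "lam * nrm w \<le> form w w" if "mean w = 0" for w using mn[OF that] by (simp add: lam_def)
    fix l assume l: "l \<in> eigenvalues_negQ p f" "l \<noteq> 0"
    then obtain v where v: "\<exists>x\<in>SS. v x \<noteq> 0" "\<And>x. x \<in> SS \<Longrightarrow> - (\<Sum>y\<in>SS. tgs_Q p f x y * v y) = l * v x"
      unfolding eigenvalues_negQ_def by blast
    have Lv: "x \<in> SS \<Longrightarrow> Lop v x = l * v x" for x using v(2)[of x] negQ[of x v] by simp
    have "mean (Lop v) = (\<Sum>x\<in>SS. l * (f x * v x))" unfolding mean_def
      by (rule sum.cong) (simp_all add: Lv)
    hence "mean (Lop v) = l * mean v" by (simp add: mean_def sum_distrib_left)
    hence mv: "mean v = 0" using mean_Lop[of v] l(2) by simp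
    have "form v v = (\<Sum>x\<in>SS. l * (f x * (v x)^2))" unfolding form_def
      by (rule sum.cong) (simp_all add: Lv power2_eq_square)
    hence fv: "form v v = l * nrm v" by (simp add: nrm_def sum_distrib_left)
    have "nrm v \<noteq> 0" using nrm_zero[of v] v(1) by auto
    hence np: "0 < nrm v" using nrm_nonneg[of v] by simp
    have "lam * nrm v \<le> l * nrm v" using mn[OF mv] fv by (simp add: lam_def)
    thus "lam \<le> l" using np by simp
  qed
qed


lemma cont_ip: "continuous_on UNIV (\<lambda>v. ip k v)"
  unfolding ip_def
  by (intro continuous_intros continuous_on_product_coordinates)

lemma ip_cong: "(\<And>x. x \<in> SS \<Longrightarrow> v x = w x) \<Longrightarrow> ip k v = ip k w"
  by (simp add: ip_def)

lemma poisson: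
  assumes mk: "mean k = 0"
  obtains u where "\<And>x. x \<in> SS \<Longrightarrow> Lop u x = k x"
proof -
  obtain lam where lpos: "0 < lam" and poinc: "\<And>w. mean w = 0 \<Longrightarrow> lam * nrm w \<le> form w w"
    using eig by blast
  define J where "J u = form u u - 2 * ip k u" for u
  define R where "R = 4 * nrm k / lam^2 + 1"
  have Rpos: "0 < R" unfolding R_def using nrm_nonneg[of k] lpos by (simp add: add_nonneg_pos)
  define C where "C = {v. \<forall>x. v x \<in> (if x \<in> SS then {- sqrt (R / f x) .. sqrt (R / f x)} else {0})}
     \<inter> {v. mean v = 0} \<inter> {v. nrm v \<le> R}"
  have cC: "compact C" unfolding C_def
    by (intro compact_Int_closed box_compact closed_Collect_eq closed_Collect_le cont_mean cont_nrm continuous_on_const)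
  have J0: "J (\<lambda>_. 0) = 0" by (simp add: J_def form_def ip_def)
  have zC: "(\<lambda>_. 0) \<in> C" using Rpos fpos by (auto simp: C_def mean_def nrm_def intro!: divide_nonneg_pos less_imp_le)
  hence Cne: "C \<noteq> {}" by blast
  have cJ: "continuous_on UNIV J" unfolding J_def
    by (intro continuous_intros cont_form cont_ip)
  obtain u0 where u0: "u0 \<in> C" and umin: "\<And>v. v \<in> C \<Longrightarrow> J u0 \<le> J v"
    using continuous_attains_inf[OF cC Cne continuous_on_subset[OF cJ]] by blast
  have mu0: "mean u0 = 0" using u0 by (simp add: C_def)
  have Ju0: "J u0 \<le> 0" using umin[OF zC] J0 by simp
  have glob: "J u0 \<le> J w" if w: "mean w = 0" for w
  proof (cases "nrm w \<le> R")
    case True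
    define w' where "w' x = (if x \<in> SS then w x else 0)" for x
    have e: "\<And>x. x \<in> SS \<Longrightarrow> w' x = w x" by (simp add: w'_def)
    have "mean w' = 0" using w by (simp add: mean_cong[OF e])
    moreover have "nrm w' \<le> R" using True by (simp add: nrm_cong[OF e])
    ultimately have "w' \<in> C" using box_bound[of _ w' R] by (auto simp: C_def w'_def)
    hence "J u0 \<le> J w'" by (rule umin)
    also have "J w' = J w" unfolding J_def by (simp add: form_cong[OF e e] ip_cong[OF e])
    finally show ?thesis .
  next
    case False
    have a: "lam * nrm w \<le> form w w" by (rule poinc[OF w])
    have b: "2 * ip k w \<le> (lam / 2) * nrm w + nrm k / (lam / 2)" by (rule cs_ip) (use lpos in simp)
    define X where "X = lam / 2 * nrm w"
    define Kk where "Kk = 2 * nrm k / lam"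
    have 1: "Kk + lam / 2 < X"
    proof -
      have "(lam / 2) * R < (lam / 2) * nrm w" using False lpos by simp
      moreover have "(lam / 2) * R = 2 * nrm k / lam + lam / 2" using lpos
        by (simp add: R_def power2_eq_square field_simps)
      ultimately show ?thesis by (simp add: X_def Kk_def)
    qed
    have 2: "2 * X \<le> form w w" using a by (simp add: X_def)
    have 3: "2 * ip k w \<le> X + Kk" using b by (simp add: X_def Kk_def)
    have "0 < J w" unfolding J_def using 1 2 3 lpos by linarith
    thus ?thesis using Ju0 by simp
  qed
  have crit: "form u0 w = ip k w" if w: "mean w = 0" for w
  proof -
    have "0 \<le> (2 * form u0 w - 2 * ip k w) * t + form w w * t^2" for t
    proof -
      have "mean (\<lambda>x. u0 x + t * w x) = 0" using mu0 w by (simp add: mean_add)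
      from glob[OF this] have "J u0 \<le> J (\<lambda>x. u0 x + t * w x)" .
      thus ?thesis unfolding J_def by (simp add: form_quad ip_add algebra_simps)
    qed
    from quad_zero[OF this] show ?thesis by simp
  qed
  define r where "r x = Lop u0 x - k x" for x
  have "mean r = mean (Lop u0) - mean k"
    by (simp add: mean_def r_def right_diff_distrib sum_subtractf)
  hence "mean r = 0" using mean_Lop[of u0] mk by simp
  from crit[OF this] have "form u0 r - ip k r = 0" by simp
  moreover have "form u0 r - ip k r = nrm r"
  proof -
    have "form u0 r - ip k r = (\<Sum>x\<in>SS. r x * (f x * Lop u0 x) - f x * k x * r x)"
      by (simp add: form_def ip_def sum_subtractf)
    also have "\<dots> = (\<Sum>x\<in>SS. f x * (r x)^2)"
      by (rule sum.cong) (simp_all add: r_def power2_eq_square algebra_simps)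
    finally show ?thesis by (simp add: nrm_def)
  qed
  ultimately have "\<And>x. x \<in> SS \<Longrightarrow> Lop u0 x = k x" using nrm_zero[of r] by (simp add: r_def)
  thus ?thesis by (rule that)
qed

end


context tgs begin

lemma eig_finite: "finite (eigenvalues_negQ p f)"
proof -
  define N where "N = card SS"
  obtain e where e: "bij_betw e {0..<N} SS"
    using ex_bij_betw_nat_finite[OF finite_states[of p]] unfolding N_def by blast
  define M where "M = mat N N (\<lambda>(i,j). - tgs_Q p f (e i) (e j))"
  have M: "M \<in> carrier_mat N N" by (simp add: M_def)
  have "eigenvalues_negQ p f \<subseteq> {x. poly (char_poly M) x = 0}"
  proof
    fix l assume "l \<in> eigenvalues_negQ p f"
    then obtain v where v: "\<exists>x\<in>SS. v x \<noteq> 0" "\<And>x. x \<in> SS \<Longrightarrow> - (\<Sum>y\<in>SS. tgs_Q p f x y * v y) = l * v x"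
      unfolding eigenvalues_negQ_def by blast
    define w where "w = vec N (\<lambda>i. v (e i))"
    have wc: "w \<in> carrier_vec N" by (simp add: w_def)
    have wnz: "w \<noteq> 0\<^sub>v N"
    proof
      assume w0: "w = 0\<^sub>v N"
      obtain x where x: "x \<in> SS" "v x \<noteq> 0" using v(1) by blast
      have "x \<in> e ` {0..<N}" using e x(1) by (simp add: bij_betw_def)
      then obtain i where i: "i < N" "e i = x" by auto
      have "w $ i = 0" using w0 i by simp
      thus False using i x by (simp add: w_def)
    qed
    have "M *\<^sub>v w = l \<cdot>\<^sub>v w"
    proof (rule eq_vecI)
      fix i assume i: "i < dim_vec (l \<cdot>\<^sub>v w)"
      hence i': "i < N" by (simp add: w_def)
      have "(M *\<^sub>v w) $ i = (\<Sum>j = 0..<N. - tgs_Q p f (e i) (e j) * v (e j))"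
        using i' by (simp add: M_def w_def scalar_prod_def)
      also have "\<dots> = - (\<Sum>y\<in>SS. tgs_Q p f (e i) y * v y)"
        using sum.reindex_bij_betw[OF e, of "\<lambda>y. tgs_Q p f (e i) y * v y"]
        by (simp add: sum_negf)
      also have "\<dots> = l * v (e i)"
      proof -
        have "e i \<in> SS" using e i' by (auto simp: bij_betw_def)
        thus ?thesis by (rule v(2))
      qed
      finally show "(M *\<^sub>v w) $ i = (l \<cdot>\<^sub>v w) $ i" using i' by (simp add: w_def)
    qed (simp add: M_def w_def)
    hence "eigenvalue M l" unfolding eigenvalue_def eigenvector_def using wc wnz M by auto
    thus "l \<in> {x. poly (char_poly M) x = 0}" using eigenvalue_root_char_poly[OF M] by simp
  qed
  moreover have "char_poly M \<noteq> 0"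
    using degree_monic_char_poly[OF M] by auto
  ultimately show ?thesis using poly_roots_finite finite_subset by blast
qed

end


context tgs begin

abbreviation "EE n F \<equiv> path_expect p f n F"

lemma paths_Suc: "paths p (Suc n) = (\<lambda>(ps, x). ps @ [x]) ` (paths p n \<times> SS)"
proof (rule Set.set_eqI)
  fix qs
  show "qs \<in> paths p (Suc n) \<longleftrightarrow> qs \<in> (\<lambda>(ps, x). ps @ [x]) ` (paths p n \<times> SS)"
  proof
    assume q: "qs \<in> paths p (Suc n)"
    hence "qs \<noteq> []" by (auto simp: paths_def)
    then obtain ps x where qs: "qs = ps @ [x]" by (cases qs rule: rev_cases) auto
    thus "qs \<in> (\<lambda>(ps, x). ps @ [x]) ` (paths p n \<times> SS)" using q
      by (auto simp: paths_def image_iff)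
  qed (auto simp: paths_def)
qed

lemma inj_snoc: "inj_on (\<lambda>(ps, x). ps @ [x]) A"
  by (auto simp: inj_on_def)

lemma finite_paths: "finite (paths p n)"
proof -
  have "paths p n \<subseteq> {xs. set xs \<subseteq> SS \<and> length xs = n}" by (auto simp: paths_def)
  thus ?thesis using finite_lists_length_eq[OF finite_states] finite_subset by blast
qed

lemma paths_props: assumes "ps \<in> paths p n" "1 \<le> n"
  shows "ps \<noteq> []" "last ps \<in> SS" "hd ps \<in> SS" "\<And>t. t < n \<Longrightarrow> ps ! t \<in> SS" "length ps = n"
proof -
  have ne: "ps \<noteq> []" and st: "set ps \<subseteq> SS" and l: "length ps = n" using assms by (auto simp: paths_def)
  show "ps \<noteq> []" "length ps = n" by fact+
  show "last ps \<in> SS" using ne st last_in_set by blast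
  show "hd ps \<in> SS" using ne st hd_in_set by blast
  show "\<And>t. t < n \<Longrightarrow> ps ! t \<in> SS" using st l nth_mem by blast
qed

lemma pp_snoc: assumes "ps \<noteq> []"
  shows "path_prob p f (ps @ [x]) = path_prob p f ps * tgs_P p f (last ps) x"
proof -
  obtain m where m: "length ps = Suc m" using assms by (cases ps) auto
  have "(\<Prod>t<length (ps @ [x]) - 1. tgs_P p f ((ps @ [x]) ! t) ((ps @ [x]) ! Suc t))
      = (\<Prod>t<Suc m. tgs_P p f ((ps @ [x]) ! t) ((ps @ [x]) ! Suc t))" using m by simp
  also have "\<dots> = (\<Prod>t<m. tgs_P p f ((ps @ [x]) ! t) ((ps @ [x]) ! Suc t)) * tgs_P p f ((ps @ [x]) ! m) ((ps @ [x]) ! Suc m)"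
    by simp
  also have "(\<Prod>t<m. tgs_P p f ((ps @ [x]) ! t) ((ps @ [x]) ! Suc t)) = (\<Prod>t<m. tgs_P p f (ps ! t) (ps ! Suc t))"
    using m by (intro prod.cong refl) (simp add: nth_append)
  also have "(ps @ [x]) ! m = last ps" using m assms by (simp add: nth_append last_conv_nth)
  also have "(ps @ [x]) ! Suc m = x" using m by (simp add: nth_append)
  finally have "(\<Prod>t<length (ps @ [x]) - 1. tgs_P p f ((ps @ [x]) ! t) ((ps @ [x]) ! Suc t))
      = (\<Prod>t<length ps - 1. tgs_P p f (ps ! t) (ps ! Suc t)) * tgs_P p f (last ps) x" using m by simp
  moreover have "(ps @ [x]) ! 0 = ps ! 0" using assms by (simp add: nth_append)
  ultimately show ?thesis by (simp add: path_prob_def)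
qed

lemma SD: assumes "1 \<le> n"
  shows "EE (Suc n) H = (\<Sum>ps\<in>paths p n. path_prob p f ps * (\<Sum>x\<in>SS. tgs_P p f (last ps) x * H (ps @ [x])))"
proof -
  have "EE (Suc n) H = (\<Sum>(ps, x)\<in>paths p n \<times> SS. path_prob p f (ps @ [x]) * H (ps @ [x]))"
    unfolding path_expect_def paths_Suc by (subst sum.reindex[OF inj_snoc]) (simp add: case_prod_beta)
  also have "\<dots> = (\<Sum>ps\<in>paths p n. \<Sum>x\<in>SS. path_prob p f (ps @ [x]) * H (ps @ [x]))"
    by (subst sum.cartesian_product[symmetric]) simp
  also have "\<dots> = (\<Sum>ps\<in>paths p n. path_prob p f ps * (\<Sum>x\<in>SS. tgs_P p f (last ps) x * H (ps @ [x])))"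
    using paths_props(1)[OF _ assms]
    by (intro sum.cong refl) (simp add: pp_snoc sum_distrib_left mult.assoc)
  finally show ?thesis .
qed

lemma paths_one: "paths p 1 = (\<lambda>x. [x]) ` SS"
proof (rule Set.set_eqI)
  fix qs show "qs \<in> paths p 1 \<longleftrightarrow> qs \<in> (\<lambda>x. [x]) ` SS"
    by (cases qs) (auto simp: paths_def)
qed

lemma E1: "EE 1 H = (\<Sum>x\<in>SS. f x * tgs_Z p f x * H [x])"
  unfolding path_expect_def paths_one
  by (subst sum.reindex) (auto simp: inj_on_def path_prob_def stat_eq)

lemma pp_nonneg: assumes "ps \<in> paths p n" "1 \<le> n" shows "0 \<le> path_prob p f ps"
proof -
  have "ps ! 0 \<in> SS" using paths_props(4)[OF assms, of 0] assms(2) by simp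
  hence "0 \<le> tgs_stat p f (ps ! 0)" using fpos Z_pos by (simp add: stat_eq less_imp_le)
  moreover have "0 \<le> (\<Prod>t<length ps - 1. tgs_P p f (ps ! t) (ps ! Suc t))"
    using assms by (intro prod_nonneg) (auto intro!: P_nonneg simp: paths_def)
  ultimately show ?thesis by (simp add: path_prob_def)
qed

lemma E_mono: assumes "1 \<le> n" "\<And>ps. ps \<in> paths p n \<Longrightarrow> F ps \<le> G ps"
  shows "EE n F \<le> EE n G"
  unfolding path_expect_def
  by (intro sum_mono mult_left_mono assms(2) pp_nonneg[OF _ assms(1)])

lemma E_lin: "EE n (\<lambda>ps. a * F ps + b * G ps) = a * EE n F + b * EE n G"
  by (simp add: path_expect_def sum.distrib sum_distrib_left algebra_simps)

lemma E_add: "EE n (\<lambda>ps. F ps + G ps) = EE n F + EE n G"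
  by (simp add: path_expect_def sum.distrib algebra_simps)

lemma E_diff: "EE n (\<lambda>ps. F ps - G ps) = EE n F - EE n G"
  by (simp add: path_expect_def sum_subtractf algebra_simps)

lemma E_cmult: "EE n (\<lambda>ps. a * F ps) = a * EE n F"
  by (simp add: path_expect_def sum_distrib_left algebra_simps)

lemma E_cong: "(\<And>ps. ps \<in> paths p n \<Longrightarrow> F ps = G ps) \<Longrightarrow> EE n F = EE n G"
  by (simp add: path_expect_def)

lemma E_last: assumes "1 \<le> n" shows "EE n (\<lambda>ps. g (last ps)) = (\<Sum>x\<in>SS. f x * tgs_Z p f x * g x)"
  using assms
proof (induction n arbitrary: g rule: dec_induct)
  case base thus ?case using E1[of "\<lambda>ps. g (last ps)"] by simp
next
  case (step n)
  have "EE (Suc n) (\<lambda>ps. g (last ps)) = EE n (\<lambda>ps. Pop g (last ps))"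
    by (subst SD[OF step(1)]) (simp add: Pop_def path_expect_def)
  also have "\<dots> = (\<Sum>x\<in>SS. f x * tgs_Z p f x * Pop g x)" by (rule step.IH)
  also have "\<dots> = (\<Sum>x\<in>SS. f x * tgs_Z p f x * g x)" unfolding Pop_def by (rule stationary)
  finally show ?case .
qed

lemma E_one: "1 \<le> n \<Longrightarrow> EE n (\<lambda>_. c) = c"
  using E_last[of n "\<lambda>_. c"] sum_fZ by (simp add: sum_distrib_right[symmetric])


lemma expand4: "(M + d)^4 = M^4 + 4 * M^3 * d + 6 * M^2 * d^2 + 4 * M * d^3 + (d::real)^4"
  by (simp add: eval_nat_numeral algebra_simps)

lemma inner4:
  fixes w d :: "'a \<Rightarrow> real"
  assumes A: "finite A" and w: "\<And>x. x \<in> A \<Longrightarrow> 0 \<le> w x" and sw: "(\<Sum>x\<in>A. w x) = 1"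
    and swd: "(\<Sum>x\<in>A. w x * d x) = 0" and dK: "\<And>x. x \<in> A \<Longrightarrow> \<bar>d x\<bar> \<le> K"
  shows "(\<Sum>x\<in>A. w x * (M + d x)^4) \<le> M^4 + 6 * K^2 * M^2 + 2 * K^3 * (1 + M^2) + K^4"
proof -
  have "A \<noteq> {}" using sw by auto
  then obtain x0 where "x0 \<in> A" by blast
  have K0: "0 \<le> K" using dK[OF \<open>x0 \<in> A\<close>] by auto
  have "(\<Sum>x\<in>A. w x * (M + d x)^4) = M^4 * (\<Sum>x\<in>A. w x) + 4 * M^3 * (\<Sum>x\<in>A. w x * d x)
      + 6 * M^2 * (\<Sum>x\<in>A. w x * (d x)^2) + 4 * M * (\<Sum>x\<in>A. w x * (d x)^3) + (\<Sum>x\<in>A. w x * (d x)^4)"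
    by (simp add: expand4 sum.distrib sum_distrib_left sum_distrib_right algebra_simps)
  also have "\<dots> = M^4 + 6 * M^2 * (\<Sum>x\<in>A. w x * (d x)^2) + 4 * M * (\<Sum>x\<in>A. w x * (d x)^3) + (\<Sum>x\<in>A. w x * (d x)^4)"
    using sw swd by simp
  also have "(\<Sum>x\<in>A. w x * (d x)^2) \<le> K^2"
  proof -
    have "(\<Sum>x\<in>A. w x * (d x)^2) \<le> (\<Sum>x\<in>A. w x * K^2)"
    proof (intro sum_mono mult_left_mono)
      fix x assume x: "x \<in> A"
      have "(d x)^2 = \<bar>d x\<bar>^2" by simp
      also have "\<dots> \<le> K^2" using dK[OF x] by (intro power_mono) auto
      finally show "(d x)^2 \<le> K^2" .
    qed (use w in auto)
    thus ?thesis by (simp add: sum_distrib_right[symmetric] sw)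
  qed
  hence "6 * M^2 * (\<Sum>x\<in>A. w x * (d x)^2) \<le> 6 * M^2 * K^2" by (intro mult_left_mono) auto
  also have "4 * M * (\<Sum>x\<in>A. w x * (d x)^3) \<le> 2 * K^3 * (1 + M^2)"
  proof -
    have "\<bar>\<Sum>x\<in>A. w x * (d x)^3\<bar> \<le> (\<Sum>x\<in>A. w x * K^3)"
    proof -
      have "\<bar>\<Sum>x\<in>A. w x * (d x)^3\<bar> \<le> (\<Sum>x\<in>A. \<bar>w x * (d x)^3\<bar>)" by (rule sum_abs)
      also have "\<dots> \<le> (\<Sum>x\<in>A. w x * K^3)"
        using dK w by (intro sum_mono) (auto simp: abs_mult power_abs intro!: mult_left_mono power_mono)
      finally show ?thesis .
    qed
    hence s3: "\<bar>\<Sum>x\<in>A. w x * (d x)^3\<bar> \<le> K^3" by (simp add: sum_distrib_right[symmetric] sw)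
    have "4 * M * (\<Sum>x\<in>A. w x * (d x)^3) \<le> 4 * \<bar>M\<bar> * \<bar>\<Sum>x\<in>A. w x * (d x)^3\<bar>"
      by (simp add: abs_mult[symmetric] mult.assoc)
    also have "\<dots> \<le> 4 * \<bar>M\<bar> * K^3" using s3 by (intro mult_left_mono) auto
    also have "\<dots> \<le> 2 * K^3 * (1 + M^2)"
    proof -
      have "2 * \<bar>M\<bar> \<le> 1 + M^2" using sum_squares_bound[of "\<bar>M\<bar>" 1] by (simp add: power2_eq_square)
      hence "K^3 * (2 * \<bar>M\<bar>) \<le> K^3 * (1 + M^2)" using K0 by (intro mult_left_mono) auto
      thus ?thesis by (simp add: algebra_simps)
    qed
    finally show ?thesis .
  qed
  also have "(\<Sum>x\<in>A. w x * (d x)^4) \<le> K^4"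
  proof -
    have "(\<Sum>x\<in>A. w x * (d x)^4) \<le> (\<Sum>x\<in>A. w x * K^4)"
    proof (intro sum_mono mult_left_mono)
      fix x assume x: "x \<in> A"
      have "(d x)^4 = \<bar>d x\<bar>^4" by simp
      also have "\<dots> \<le> K^4" using dK[OF x] by (intro power_mono) auto
      finally show "(d x)^4 \<le> K^4" .
    qed (use w in auto)
    thus ?thesis by (simp add: sum_distrib_right[symmetric] sw)
  qed
  finally show ?thesis by (simp add: algebra_simps)
qed


definition Sg :: "(bool list \<Rightarrow> real) \<Rightarrow> bool list list \<Rightarrow> real" where
  "Sg g ps = (\<Sum>t<length ps. g (ps ! t))"

definition dd :: "(bool list \<Rightarrow> real) \<Rightarrow> bool list \<Rightarrow> bool list \<Rightarrow> real" where
  "dd u a x = u x - Pop u a"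

definition Mg :: "(bool list \<Rightarrow> real) \<Rightarrow> bool list list \<Rightarrow> real" where
  "Mg u ps = (\<Sum>t\<in>{1..<length ps}. dd u (ps ! (t - 1)) (ps ! t))"

definition s2 :: "(bool list \<Rightarrow> real) \<Rightarrow> real" where
  "s2 u = (\<Sum>a\<in>SS. f a * tgs_Z p f a * (\<Sum>x\<in>SS. tgs_P p f a x * (dd u a x)^2))"

lemma Sg_snoc: "Sg g (ps @ [x]) = Sg g ps + g x"
  by (simp add: Sg_def nth_append)

lemma Mg_snoc: assumes "ps \<noteq> []" shows "Mg u (ps @ [x]) = Mg u ps + dd u (last ps) x"
proof -
  obtain m where m: "length ps = Suc m" using assms by (cases ps) auto
  have "Mg u (ps @ [x]) = (\<Sum>t\<in>{1..<Suc (Suc m)}. dd u ((ps @ [x]) ! (t - 1)) ((ps @ [x]) ! t))"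
    using m by (simp add: Mg_def)
  also have "\<dots> = (\<Sum>t\<in>{1..<Suc m}. dd u ((ps @ [x]) ! (t - 1)) ((ps @ [x]) ! t)) + dd u ((ps @ [x]) ! m) ((ps @ [x]) ! Suc m)"
    by (subst sum.atLeastLessThan_Suc) auto
  also have "(\<Sum>t\<in>{1..<Suc m}. dd u ((ps @ [x]) ! (t - 1)) ((ps @ [x]) ! t)) = Mg u ps"
    unfolding Mg_def m by (intro sum.cong refl) (auto simp: nth_append m)
  also have "(ps @ [x]) ! m = last ps" using m assms by (simp add: nth_append last_conv_nth)
  also have "(ps @ [x]) ! Suc m = x" using m by (simp add: nth_append)
  finally show ?thesis .
qed

lemma Mg_single: "Mg u [x] = 0" by (simp add: Mg_def)

lemma decomp: "ps \<noteq> [] \<Longrightarrow> Sg (\<lambda>x. u x - Pop u x) ps = u (hd ps) - Pop u (last ps) + Mg u ps"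
proof (induction ps rule: rev_induct)
  case Nil thus ?case by simp
next
  case (snoc x ps)
  show ?case
  proof (cases "ps = []")
    case True thus ?thesis by (simp add: Sg_def Mg_single)
  next
    case False
    thus ?thesis using snoc.IH by (simp add: Sg_snoc Mg_snoc dd_def)
  qed
qed

lemma Pop_bound: assumes "\<And>x. x \<in> SS \<Longrightarrow> \<bar>u x\<bar> \<le> U" "a \<in> SS" shows "\<bar>Pop u a\<bar> \<le> U"
proof -
  have "\<bar>Pop u a\<bar> \<le> (\<Sum>y\<in>SS. \<bar>tgs_P p f a y * u y\<bar>)" unfolding Pop_def by (rule sum_abs)
  also have "\<dots> \<le> (\<Sum>y\<in>SS. tgs_P p f a y * U)"
    using assms P_nonneg[OF assms(2)] by (intro sum_mono) (auto simp: abs_mult intro!: mult_left_mono)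
  also have "\<dots> = U" using stoch[OF assms(2)] by (simp add: sum_distrib_right[symmetric])
  finally show ?thesis .
qed

lemma dd_bound: assumes "\<And>x. x \<in> SS \<Longrightarrow> \<bar>u x\<bar> \<le> U" "a \<in> SS" "x \<in> SS" shows "\<bar>dd u a x\<bar> \<le> 2 * U"
proof -
  have "\<bar>Pop u a\<bar> \<le> U" by (rule Pop_bound) (use assms in auto)
  thus ?thesis using assms(1)[OF assms(3)] by (simp add: dd_def)
qed

lemma sPd: assumes "a \<in> SS" shows "(\<Sum>x\<in>SS. tgs_P p f a x * dd u a x) = 0"
  using stoch[OF assms] by (simp add: dd_def right_diff_distrib sum_subtractf Pop_def sum_distrib_right[symmetric])

lemma E_Sg: assumes "(\<Sum>x\<in>SS. f x * tgs_Z p f x * g x) = 0" "1 \<le> n" shows "EE n (Sg g) = 0"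
  using assms(2)
proof (induction n rule: dec_induct)
  case base
  have "Sg g [x] = g x" for x by (simp add: Sg_def)
  thus ?case using E1[of "Sg g"] assms(1) by (simp add: One_nat_def)
next
  case (step n)
  have "EE (Suc n) (Sg g) = EE n (\<lambda>ps. Sg g ps + Pop g (last ps))"
  proof (subst SD[OF step(1)], unfold path_expect_def, intro sum.cong refl)
    fix ps assume ps: "ps \<in> paths p n"
    have l: "last ps \<in> SS" using paths_props(2)[OF ps step(1)] .
    have "(\<Sum>x\<in>SS. tgs_P p f (last ps) x * Sg g (ps @ [x])) = (\<Sum>x\<in>SS. tgs_P p f (last ps) x) * Sg g ps + Pop g (last ps)"
      by (simp add: Sg_snoc Pop_def distrib_left sum.distrib sum_distrib_right)
    thus "path_prob p f ps * (\<Sum>x\<in>SS. tgs_P p f (last ps) x * Sg g (ps @ [x])) = path_prob p f ps * (Sg g ps + Pop g (last ps))"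
      using stoch[OF l] by simp
  qed
  also have "\<dots> = EE n (Sg g) + EE n (\<lambda>ps. Pop g (last ps))" by (rule E_add)
  also have "EE n (\<lambda>ps. Pop g (last ps)) = 0" using E_last[OF step(1), of "Pop g"] stationary[of g] assms(1)
    by (simp add: Pop_def)
  finally show ?case using step.IH by simp
qed

lemma E_M2: assumes "1 \<le> n" shows "EE n (\<lambda>ps. (Mg u ps)^2) = (real n - 1) * s2 u"
  using assms
proof (induction n rule: dec_induct)
  case base thus ?case using E1[of "\<lambda>ps. (Mg u ps)^2"] by (simp add: Mg_single)
next
  case (step n)
  define psi where "psi a = (\<Sum>x\<in>SS. tgs_P p f a x * (dd u a x)^2)" for a
  have "EE (Suc n) (\<lambda>ps. (Mg u ps)^2) = EE n (\<lambda>ps. (Mg u ps)^2 + psi (last ps))"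
  proof (subst SD[OF step(1)], unfold path_expect_def, intro sum.cong refl)
    fix ps assume ps: "ps \<in> paths p n"
    have l: "last ps \<in> SS" using paths_props(2)[OF ps step(1)] .
    have ne: "ps \<noteq> []" using paths_props(1)[OF ps step(1)] .
    have "(\<Sum>x\<in>SS. tgs_P p f (last ps) x * (Mg u (ps @ [x]))^2)
        = (\<Sum>x\<in>SS. tgs_P p f (last ps) x) * (Mg u ps)^2 + 2 * Mg u ps * (\<Sum>x\<in>SS. tgs_P p f (last ps) x * dd u (last ps) x) + psi (last ps)"
      by (simp add: Mg_snoc[OF ne] psi_def power2_eq_square sum.distrib sum_distrib_left sum_distrib_right algebra_simps)
    thus "path_prob p f ps * (\<Sum>x\<in>SS. tgs_P p f (last ps) x * (Mg u (ps @ [x]))^2) = path_prob p f ps * ((Mg u ps)^2 + psi (last ps))"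
      using stoch[OF l] sPd[OF l] by simp
  qed
  also have "\<dots> = EE n (\<lambda>ps. (Mg u ps)^2) + EE n (\<lambda>ps. psi (last ps))" by (rule E_add)
  also have "EE n (\<lambda>ps. psi (last ps)) = s2 u" using E_last[OF step(1), of psi] by (simp add: s2_def psi_def)
  finally show ?case using step.IH by (simp add: algebra_simps)
qed

lemma s2_bounds: assumes "\<And>x. x \<in> SS \<Longrightarrow> \<bar>u x\<bar> \<le> U" shows "0 \<le> s2 u" "s2 u \<le> (2 * U)^2"
proof -
  have in_b: "0 \<le> (\<Sum>x\<in>SS. tgs_P p f a x * (dd u a x)^2) \<and> (\<Sum>x\<in>SS. tgs_P p f a x * (dd u a x)^2) \<le> (2 * U)^2" if a: "a \<in> SS" for a
  proof
    show "0 \<le> (\<Sum>x\<in>SS. tgs_P p f a x * (dd u a x)^2)" using P_nonneg[OF a] by (intro sum_nonneg) auto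
    have "(\<Sum>x\<in>SS. tgs_P p f a x * (dd u a x)^2) \<le> (\<Sum>x\<in>SS. tgs_P p f a x * (2 * U)^2)"
    proof (intro sum_mono mult_left_mono)
      fix x assume x: "x \<in> SS"
      have "(dd u a x)^2 = \<bar>dd u a x\<bar>^2" by simp
      also have "\<dots> \<le> (2 * U)^2" using dd_bound[OF assms a x] by (intro power_mono) auto
      finally show "(dd u a x)^2 \<le> (2 * U)^2" .
    qed (use P_nonneg[OF a] in auto)
    thus "(\<Sum>x\<in>SS. tgs_P p f a x * (dd u a x)^2) \<le> (2 * U)^2" using stoch[OF a] by (simp add: sum_distrib_right[symmetric])
  qed
  have fz: "a \<in> SS \<Longrightarrow> 0 \<le> f a * tgs_Z p f a" for a using fpos Z_pos by (simp add: less_imp_le)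
  show "0 \<le> s2 u" unfolding s2_def
  proof (rule sum_nonneg)
    fix a assume a: "a \<in> SS"
    show "0 \<le> f a * tgs_Z p f a * (\<Sum>x\<in>SS. tgs_P p f a x * (dd u a x)^2)"
      using mult_nonneg_nonneg[OF fz[OF a] conjunct1[OF in_b[OF a]]] .
  qed
  have "s2 u \<le> (\<Sum>a\<in>SS. f a * tgs_Z p f a * (2 * U)^2)" unfolding s2_def
    using in_b fz by (intro sum_mono mult_left_mono) auto
  also have "\<dots> = (2 * U)^2" using sum_fZ by (simp add: sum_distrib_right[symmetric])
  finally show "s2 u \<le> (2 * U)^2" .
qed

lemma E_M4: assumes U: "\<And>x. x \<in> SS \<Longrightarrow> \<bar>u x\<bar> \<le> U" and n: "1 \<le> n"
  defines "K \<equiv> 2 * U"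
  shows "EE n (\<lambda>ps. (Mg u ps)^4) \<le> (7 * K^4 + 2 * K^5 + 2 * K^3) * (real n)^2"
  using n
proof (induction n rule: dec_induct)
  case base
  have K0: "0 \<le> K" using U[of "replicate p False"] by (simp add: K_def states_def)
  thus ?case using E1[of "\<lambda>ps. (Mg u ps)^4"] by (simp add: Mg_single)
next
  case (step n)
  have K0: "0 \<le> K" using U[of "replicate p False"] by (simp add: K_def states_def)
  define A where "A = 7 * K^4 + 2 * K^5 + 2 * K^3"
  have "EE (Suc n) (\<lambda>ps. (Mg u ps)^4) \<le> EE n (\<lambda>ps. (Mg u ps)^4 + 6 * K^2 * (Mg u ps)^2 + 2 * K^3 * (1 + (Mg u ps)^2) + K^4)"
  proof (subst SD[OF step(1)], unfold path_expect_def, intro sum_mono mult_left_mono)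
    fix ps assume ps: "ps \<in> paths p n"
    have l: "last ps \<in> SS" using paths_props(2)[OF ps step(1)] .
    have ne: "ps \<noteq> []" using paths_props(1)[OF ps step(1)] .
    show "0 \<le> path_prob p f ps" by (rule pp_nonneg[OF ps step(1)])
    have "(\<Sum>x\<in>SS. tgs_P p f (last ps) x * (Mg u (ps @ [x]))^4) = (\<Sum>x\<in>SS. tgs_P p f (last ps) x * (Mg u ps + dd u (last ps) x)^4)"
      by (simp add: Mg_snoc[OF ne])
    also have "\<dots> \<le> (Mg u ps)^4 + 6 * K^2 * (Mg u ps)^2 + 2 * K^3 * (1 + (Mg u ps)^2) + K^4"
      by (rule inner4[OF finite_states P_nonneg[OF l] stoch[OF l] sPd[OF l]])
         (use dd_bound[OF U l] in \<open>simp add: K_def\<close>)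
    finally show "(\<Sum>x\<in>SS. tgs_P p f (last ps) x * (Mg u (ps @ [x]))^4) \<le> (Mg u ps)^4 + 6 * K^2 * (Mg u ps)^2 + 2 * K^3 * (1 + (Mg u ps)^2) + K^4" .
  qed
  also have "\<dots> = EE n (\<lambda>ps. ((Mg u ps)^4 + (6 * K^2 + 2 * K^3) * (Mg u ps)^2) + (2 * K^3 + K^4))"
    by (rule E_cong) (simp add: algebra_simps)
  also have "\<dots> = EE n (\<lambda>ps. (Mg u ps)^4) + (6 * K^2 + 2 * K^3) * EE n (\<lambda>ps. (Mg u ps)^2) + (2 * K^3 + K^4)"
    by (simp only: E_add E_cmult E_one[OF step(1)])
  also have "EE n (\<lambda>ps. (Mg u ps)^2) = (real n - 1) * s2 u" by (rule E_M2[OF step(1)])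
  also have "(6 * K^2 + 2 * K^3) * ((real n - 1) * s2 u) \<le> (6 * K^2 + 2 * K^3) * (real n * K^2)"
  proof (intro mult_left_mono)
    have "(real n - 1) * s2 u \<le> real n * s2 u" using s2_bounds(1)[OF U] by (simp add: algebra_simps)
    also have "\<dots> \<le> real n * K^2" using s2_bounds(2)[OF U] by (intro mult_left_mono) (auto simp: K_def)
    finally show "(real n - 1) * s2 u \<le> real n * K^2" .
  qed (use K0 in auto)
  also have "EE n (\<lambda>ps. (Mg u ps)^4) \<le> A * (real n)^2" using step.IH by (simp add: A_def)
  finally have "EE (Suc n) (\<lambda>ps. (Mg u ps)^4) \<le> A * (real n)^2 + (6 * K^2 + 2 * K^3) * (real n * K^2) + (2 * K^3 + K^4)"
    by simp
  also have "\<dots> \<le> A * (real (Suc n))^2"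
  proof -
    have n1: "1 \<le> real n" using step(1) by simp
    have "(6 * K^2 + 2 * K^3) * (real n * K^2) + (2 * K^3 + K^4) \<le> A * (2 * real n + 1)"
    proof -
      have "(6 * K^2 + 2 * K^3) * (real n * K^2) = (6 * K^4 + 2 * K^5) * real n" by (simp add: algebra_simps power_add[symmetric] eval_nat_numeral)
      also have "\<dots> \<le> A * real n" unfolding A_def using K0 n1 by (intro mult_right_mono) auto
      finally have a: "(6 * K^2 + 2 * K^3) * (real n * K^2) \<le> A * real n" .
      have b: "2 * K^3 + K^4 \<le> A * real n" unfolding A_def using K0 n1
        by (smt (verit) mult_left_mono zero_le_power mult_cancel_left1)
      have c: "0 \<le> A" unfolding A_def using K0 by simp
      from a b c show ?thesis by (simp add: algebra_simps)
    qed
    thus ?thesis by (simp add: power2_eq_square algebra_simps)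
  qed
  finally show ?case by (simp add: A_def)
qed

end


lemma amgm: fixes F G t :: real assumes "0 < t" shows "\<bar>F * G\<bar> \<le> (F^2 / t + t * G^2) / 2"
proof -
  have "0 \<le> (\<bar>F\<bar> - t * \<bar>G\<bar>)^2" by simp
  hence "2 * t * (\<bar>F\<bar> * \<bar>G\<bar>) \<le> F^2 + t^2 * G^2" by (simp add: power2_eq_square algebra_simps)
  hence "2 * (\<bar>F\<bar> * \<bar>G\<bar>) \<le> (F^2 + t^2 * G^2) / t" using assms
    by (subst pos_le_divide_eq) (simp_all add: algebra_simps)
  also have "(F^2 + t^2 * G^2) / t = F^2 / t + t * G^2" using assms
    by (simp add: add_divide_distrib power2_eq_square)
  finally have "2 * (\<bar>F\<bar> * \<bar>G\<bar>) \<le> F^2 / t + t * G^2" .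
  thus ?thesis by (simp add: abs_mult)
qed

context tgs begin

lemma E_abs: assumes "1 \<le> n" shows "\<bar>EE n F\<bar> \<le> EE n (\<lambda>ps. \<bar>F ps\<bar>)"
proof -
  have "EE n F \<le> EE n (\<lambda>ps. \<bar>F ps\<bar>)" by (rule E_mono[OF assms]) simp
  moreover have "- EE n F \<le> EE n (\<lambda>ps. \<bar>F ps\<bar>)"
  proof -
    have "- EE n F = EE n (\<lambda>ps. - F ps)" using E_cmult[of n "-1" F] by simp
    also have "\<dots> \<le> EE n (\<lambda>ps. \<bar>F ps\<bar>)" by (rule E_mono[OF assms]) simp
    finally show ?thesis .
  qed
  ultimately show ?thesis by simp
qed

lemma E_amgm: assumes "1 \<le> n" "0 < t"
  shows "EE n (\<lambda>ps. \<bar>F ps * G ps\<bar>) \<le> (EE n (\<lambda>ps. (F ps)^2) / t + t * EE n (\<lambda>ps. (G ps)^2)) / 2"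
proof -
  have "EE n (\<lambda>ps. \<bar>F ps * G ps\<bar>) \<le> EE n (\<lambda>ps. ((F ps)^2 / t + t * (G ps)^2) / 2)"
    by (rule E_mono[OF assms(1)]) (rule amgm[OF assms(2)])
  also have "\<dots> = EE n (\<lambda>ps. (1 / (2 * t)) * (F ps)^2 + (t / 2) * (G ps)^2)"
    by (rule E_cong) (simp add: add_divide_distrib)
  also have "\<dots> = (EE n (\<lambda>ps. (F ps)^2) / t + t * EE n (\<lambda>ps. (G ps)^2)) / 2"
    by (simp only: E_lin) (use assms(2) in \<open>simp add: field_simps\<close>)
  finally show ?thesis .
qed

lemma Z_ge: assumes "x \<in> SS" shows "1 / 2 \<le> tgs_Z p f x"
proof -
  have "(\<Sum>i<p. (1::real) / 2) \<le> sp x" unfolding sp_def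
  proof (rule sum_mono)
    fix i assume "i \<in> {..<p}"
    hence i: "i < p" by simp
    have "f x / (2 * f x) \<le> (f x + f (flip x i)) / (2 * f x)"
      using fpos[OF assms] fpos[OF flip_in[OF assms, of i]] by (intro divide_right_mono) auto
    thus "1 / 2 \<le> tgs_pi f x i" using fpos[OF assms] by (simp add: pi_eq[OF assms i])
  qed
  hence "real p / 2 \<le> sp x" by simp
  thus ?thesis using p1 by (simp add: Z_eq field_simps)
qed

definition Zs where "Zs = (\<Sum>x\<in>SS. tgs_Z p f x)"

lemma Z_le: assumes "x \<in> SS" shows "tgs_Z p f x \<le> Zs"
  unfolding Zs_def by (rule member_le_sum) (auto simp: assms finite_states less_imp_le[OF Z_pos])

lemma Zs_pos: "0 < Zs"
proof -
  have "replicate p False \<in> SS" by (simp add: states_def)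
  thus ?thesis using Z_le Z_pos by (meson less_le_trans)
qed

lemma w_bounds: assumes "x \<in> SS" shows "1 / Zs \<le> 1 / tgs_Z p f x" "1 / tgs_Z p f x \<le> 2"
  using Z_le[OF assms] Z_ge[OF assms] Z_pos[OF assms] Zs_pos
  by (auto simp: field_simps)

lemma Sg_cong: "(\<And>x. x \<in> set ps \<Longrightarrow> g x = g' x) \<Longrightarrow> Sg g ps = Sg g' ps"
  unfolding Sg_def by (intro sum.cong refl) auto

lemma Sg_lin: "Sg (\<lambda>x. a * g x + b * g' x) ps = a * Sg g ps + b * Sg g' ps"
  by (simp add: Sg_def sum.distrib sum_distrib_left)

lemma Sg_minus1: "Sg (\<lambda>x. g x - 1) ps = Sg g ps - real (length ps)"
  by (simp add: Sg_def sum_subtractf)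

lemma Sg_bounds: assumes "\<And>x. x \<in> set ps \<Longrightarrow> lo \<le> g x \<and> g x \<le> hi"
  shows "real (length ps) * lo \<le> Sg g ps" "Sg g ps \<le> real (length ps) * hi"
proof -
  have "(\<Sum>t<length ps. lo) \<le> Sg g ps" unfolding Sg_def using assms nth_mem by (intro sum_mono) blast
  thus "real (length ps) * lo \<le> Sg g ps" by simp
  have "Sg g ps \<le> (\<Sum>t<length ps. hi)" unfolding Sg_def using assms nth_mem by (intro sum_mono) blast
  thus "Sg g ps \<le> real (length ps) * hi" by simp
qed

end

lemma pow4_sum: "((a::real) + b)^4 \<le> 8 * (a^4 + b^4)"
proof -
  have 1: "(a + b)^2 \<le> 2 * (a^2 + b^2)" using sum_squares_bound[of a b] by (simp add: power2_eq_square algebra_simps)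
  have "(a + b)^4 = ((a + b)^2)^2" by simp
  also have "\<dots> \<le> (2 * (a^2 + b^2))^2" using 1 by (intro power_mono) auto
  also have "\<dots> = 4 * (a^2 + b^2)^2" by (simp only: power_mult_distrib) simp
  also have "(a^2 + b^2)^2 \<le> 2 * (a^4 + b^4)"
  proof -
    have e: "(a^2 + b^2)^2 = a^4 + b^4 + 2 * (a^2 * b^2)" by (simp add: power2_eq_square power4_eq_xxxx algebra_simps)
    have "0 \<le> (a^2 - b^2)^2" by simp
    hence "2 * (a^2 * b^2) \<le> a^4 + b^4" by (simp add: power2_eq_square power4_eq_xxxx algebra_simps)
    thus ?thesis unfolding e by simp
  qed
  finally show ?thesis by simp
qed

lemma sq_sum: "((a::real) + b)^2 \<le> 2 * (a^2 + b^2)"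
  using sum_squares_bound[of a b] by (simp add: power2_eq_square algebra_simps)

locale tgs_h = tgs +
  fixes h u v :: "bool list \<Rightarrow> real"
  assumes hu: "\<And>x. x \<in> states p \<Longrightarrow> u x - Pop u x = (h x - (\<Sum>y\<in>states p. f y * h y)) / tgs_Z p f x"
    and hv: "\<And>x. x \<in> states p \<Longrightarrow> v x - Pop v x = 1 / tgs_Z p f x - 1"
begin

definition mu where "mu = (\<Sum>y\<in>SS. f y * h y)"
definition gg where "gg x = (h x - mu) / tgs_Z p f x" for x
definition wz where "wz x = 1 / tgs_Z p f x" for x
definition U where "U = (\<Sum>x\<in>SS. \<bar>u x\<bar>)"
definition V where "V = (\<Sum>x\<in>SS. \<bar>v x\<bar>)"

definition XX where "XX ps = Sg gg ps" for ps
definition BB where "BB ps = Sg wz ps" for ps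
definition TT where "TT ps = Sg (\<lambda>x. wz x - 1) ps" for ps
definition a0 where "a0 ps = u (hd ps) - Pop u (last ps)" for ps
definition a1 where "a1 ps = v (hd ps) - Pop v (last ps)" for ps

lemma U_bound: "x \<in> SS \<Longrightarrow> \<bar>u x\<bar> \<le> U"
  unfolding U_def by (rule member_le_sum[where f="\<lambda>x. \<bar>u x\<bar>"]) (auto simp: finite_states)

lemma V_bound: "x \<in> SS \<Longrightarrow> \<bar>v x\<bar> \<le> V"
  unfolding V_def by (rule member_le_sum[where f="\<lambda>x. \<bar>v x\<bar>"]) (auto simp: finite_states)

lemma U0: "0 \<le> U" unfolding U_def by (simp add: sum_nonneg)
lemma V0: "0 \<le> V" unfolding V_def by (simp add: sum_nonneg)

lemma TT_eq: "TT ps = BB ps - real (length ps)"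
  by (simp add: TT_def BB_def Sg_minus1)

context
  fixes n ps assumes n: "1 \<le> n" and ps: "ps \<in> paths p n"
begin

lemma set_ps: "x \<in> set ps \<Longrightarrow> x \<in> SS"
  using ps by (auto simp: paths_def)

lemma len_ps: "length ps = n" using ps by (simp add: paths_def)

lemma XX_dec: "XX ps = a0 ps + Mg u ps"
proof -
  have "XX ps = Sg (\<lambda>x. u x - Pop u x) ps"
    unfolding XX_def by (rule Sg_cong) (simp add: hu set_ps gg_def mu_def)
  also have "\<dots> = a0 ps + Mg u ps" using decomp[OF paths_props(1)[OF ps n]] by (simp add: a0_def)
  finally show ?thesis .
qed

lemma TT_dec: "TT ps = a1 ps + Mg v ps"
proof -
  have "TT ps = Sg (\<lambda>x. v x - Pop v x) ps"
    unfolding TT_def by (rule Sg_cong) (simp add: hv set_ps wz_def)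
  also have "\<dots> = a1 ps + Mg v ps" using decomp[OF paths_props(1)[OF ps n]] by (simp add: a1_def)
  finally show ?thesis .
qed

lemma a0_bound: "\<bar>a0 ps\<bar> \<le> 2 * U"
proof -
  have "\<bar>u (hd ps)\<bar> \<le> U" by (rule U_bound[OF paths_props(3)[OF ps n]])
  moreover have "\<bar>Pop u (last ps)\<bar> \<le> U" by (rule Pop_bound[OF U_bound paths_props(2)[OF ps n]])
  ultimately show ?thesis by (simp add: a0_def)
qed

lemma a1_bound: "\<bar>a1 ps\<bar> \<le> 2 * V"
proof -
  have "\<bar>v (hd ps)\<bar> \<le> V" by (rule V_bound[OF paths_props(3)[OF ps n]])
  moreover have "\<bar>Pop v (last ps)\<bar> \<le> V" by (rule Pop_bound[OF V_bound paths_props(2)[OF ps n]])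
  ultimately show ?thesis by (simp add: a1_def)
qed

lemma BB_bounds: "real n / Zs \<le> BB ps" "BB ps \<le> 2 * real n"
  using Sg_bounds[of ps "1 / Zs" wz 2] w_bounds[OF set_ps] len_ps
  by (auto simp: BB_def wz_def)

lemma BB_pos: "0 < BB ps"
proof -
  have "0 < real n / Zs" using n Zs_pos by simp
  thus ?thesis using BB_bounds(1) by linarith
qed

lemma est_eq: "tgs_est p f h ps = mu + XX ps / BB ps"
proof -
  have "(\<Sum>t<length ps. h (ps ! t) / tgs_Z p f (ps ! t)) = Sg (\<lambda>x. 1 * gg x + mu * wz x) ps"
    unfolding Sg_def by (intro sum.cong refl) (simp add: gg_def wz_def diff_divide_distrib)
  also have "\<dots> = XX ps + mu * BB ps" by (simp only: Sg_lin XX_def BB_def)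
  finally have 1: "(\<Sum>t<length ps. h (ps ! t) / tgs_Z p f (ps ! t)) = XX ps + mu * BB ps" .
  have 2: "(\<Sum>t<length ps. 1 / tgs_Z p f (ps ! t)) = BB ps" by (simp add: BB_def Sg_def wz_def)
  show ?thesis unfolding tgs_est_def 1 2 using BB_pos by (simp add: field_simps)
qed

lemma XX_sq: "(XX ps)^2 \<le> 8 * U^2 + 2 * (Mg u ps)^2"
proof -
  have "(XX ps)^2 \<le> 2 * ((a0 ps)^2 + (Mg u ps)^2)" unfolding XX_dec by (rule sq_sum)
  moreover have "(a0 ps)^2 \<le> (2 * U)^2"
  proof -
    have "(a0 ps)^2 = \<bar>a0 ps\<bar>^2" by simp
    also have "\<dots> \<le> (2 * U)^2" using a0_bound by (intro power_mono) auto
    finally show ?thesis .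
  qed
  ultimately show ?thesis by (simp add: power2_eq_square)
qed

lemma TT_sq: "(TT ps)^2 \<le> 8 * V^2 + 2 * (Mg v ps)^2"
proof -
  have "(TT ps)^2 \<le> 2 * ((a1 ps)^2 + (Mg v ps)^2)" unfolding TT_dec by (rule sq_sum)
  moreover have "(a1 ps)^2 \<le> (2 * V)^2"
  proof -
    have "(a1 ps)^2 = \<bar>a1 ps\<bar>^2" by simp
    also have "\<dots> \<le> (2 * V)^2" using a1_bound by (intro power_mono) auto
    finally show ?thesis .
  qed
  ultimately show ?thesis by (simp add: power2_eq_square)
qed

lemma XX_4: "(XX ps)^4 \<le> 128 * U^4 + 8 * (Mg u ps)^4"
proof -
  have "(XX ps)^4 \<le> 8 * ((a0 ps)^4 + (Mg u ps)^4)" unfolding XX_dec by (rule pow4_sum)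
  moreover have "(a0 ps)^4 \<le> (2 * U)^4"
  proof -
    have "(a0 ps)^4 = \<bar>a0 ps\<bar>^4" by simp
    also have "\<dots> \<le> (2 * U)^4" using a0_bound by (intro power_mono) auto
    finally show ?thesis .
  qed
  ultimately show ?thesis by simp
qed

end


lemma EM2u: "1 \<le> n \<Longrightarrow> EE n (\<lambda>ps. (Mg u ps)^2) \<le> real n * (2 * U)^2"
proof -
  assume n: "1 \<le> n"
  have "EE n (\<lambda>ps. (Mg u ps)^2) = (real n - 1) * s2 u" by (rule E_M2[OF n])
  also have "\<dots> \<le> real n * s2 u" using s2_bounds(1)[OF U_bound] by (simp add: algebra_simps)
  also have "\<dots> \<le> real n * (2 * U)^2" using s2_bounds(2)[OF U_bound] by (intro mult_left_mono) auto
  finally show ?thesis .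
qed

lemma EM2v: "1 \<le> n \<Longrightarrow> EE n (\<lambda>ps. (Mg v ps)^2) \<le> real n * (2 * V)^2"
proof -
  assume n: "1 \<le> n"
  have "EE n (\<lambda>ps. (Mg v ps)^2) = (real n - 1) * s2 v" by (rule E_M2[OF n])
  also have "\<dots> \<le> real n * s2 v" using s2_bounds(1)[OF V_bound] by (simp add: algebra_simps)
  also have "\<dots> \<le> real n * (2 * V)^2" using s2_bounds(2)[OF V_bound] by (intro mult_left_mono) auto
  finally show ?thesis .
qed

definition c1 where "c1 = 8 * U^2 + 2 * (2 * U)^2"
definition c1' where "c1' = 8 * V^2 + 2 * (2 * V)^2"
definition c4 where "c4 = 128 * U^4 + 8 * (7 * (2*U)^4 + 2 * (2*U)^5 + 2 * (2*U)^3)"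

lemma c_nonneg: "0 \<le> c1" "0 \<le> c1'" "0 \<le> c4"
  using U0 V0 by (auto simp: c1_def c1'_def c4_def)

lemma E_XX2: assumes n: "1 \<le> n" shows "EE n (\<lambda>ps. (XX ps)^2) \<le> real n * c1"
proof -
  have "EE n (\<lambda>ps. (XX ps)^2) \<le> EE n (\<lambda>ps. 8 * U^2 + 2 * (Mg u ps)^2)"
    by (rule E_mono[OF n]) (rule XX_sq[OF n])
  also have "\<dots> = 8 * U^2 + 2 * EE n (\<lambda>ps. (Mg u ps)^2)"
    by (simp only: E_add E_cmult E_one[OF n])
  also have "\<dots> \<le> 8 * U^2 + 2 * (real n * (2 * U)^2)" using EM2u[OF n] by simp
  also have "\<dots> \<le> real n * c1" using n unfolding c1_def
    using mult_right_mono[of 1 "real n" "U^2"] mult_right_mono[of 1 "real n" "V^2"] by (simp add: algebra_simps)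
  finally show ?thesis .
qed

lemma E_TT2: assumes n: "1 \<le> n" shows "EE n (\<lambda>ps. (TT ps)^2) \<le> real n * c1'"
proof -
  have "EE n (\<lambda>ps. (TT ps)^2) \<le> EE n (\<lambda>ps. 8 * V^2 + 2 * (Mg v ps)^2)"
    by (rule E_mono[OF n]) (rule TT_sq[OF n])
  also have "\<dots> = 8 * V^2 + 2 * EE n (\<lambda>ps. (Mg v ps)^2)"
    by (simp only: E_add E_cmult E_one[OF n])
  also have "\<dots> \<le> 8 * V^2 + 2 * (real n * (2 * V)^2)" using EM2v[OF n] by simp
  also have "\<dots> \<le> real n * c1'" using n unfolding c1'_def
    using mult_right_mono[of 1 "real n" "U^2"] mult_right_mono[of 1 "real n" "V^2"] by (simp add: algebra_simps)
  finally show ?thesis .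
qed

lemma E_XX4: assumes n: "1 \<le> n" shows "EE n (\<lambda>ps. (XX ps)^4) \<le> (real n)^2 * c4"
proof -
  have "EE n (\<lambda>ps. (XX ps)^4) \<le> EE n (\<lambda>ps. 128 * U^4 + 8 * (Mg u ps)^4)"
    by (rule E_mono[OF n]) (rule XX_4[OF n])
  also have "\<dots> = 128 * U^4 + 8 * EE n (\<lambda>ps. (Mg u ps)^4)"
    by (simp only: E_add E_cmult E_one[OF n])
  also have "\<dots> \<le> 128 * U^4 + 8 * ((7 * (2*U)^4 + 2 * (2*U)^5 + 2 * (2*U)^3) * (real n)^2)"
    using E_M4[OF U_bound n] by simp
  also have "\<dots> \<le> (real n)^2 * c4"
  proof -
    have "1 \<le> (real n)^2" using n by simp
    hence "128 * U^4 \<le> (real n)^2 * (128 * U^4)" using U0 by (simp add: mult_le_cancel_right1)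
    thus ?thesis unfolding c4_def by (simp add: algebra_simps)
  qed
  finally show ?thesis .
qed

lemma E_XX0: assumes n: "1 \<le> n" shows "EE n XX = 0"
proof -
  have "(\<Sum>x\<in>SS. f x * tgs_Z p f x * gg x) = (\<Sum>x\<in>SS. f x * h x - mu * f x)"
  proof (rule sum.cong[OF refl])
    fix x assume x: "x \<in> SS"
    have "tgs_Z p f x \<noteq> 0" using Z_pos[OF x] by simp
    thus "f x * tgs_Z p f x * gg x = f x * h x - mu * f x" by (simp add: gg_def field_simps)
  qed
  also have "\<dots> = 0" by (simp add: sum_subtractf sum_distrib_left[symmetric] fsum mu_def)
  finally have "(\<Sum>x\<in>SS. f x * tgs_Z p f x * gg x) = 0" .
  from E_Sg[OF this n] show ?thesis by (simp add: XX_def[abs_def])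
qed


lemma sqrt_facts: assumes "1 \<le> n" shows "1 \<le> sqrt (real n)" "sqrt (real n) * sqrt (real n) = real n"
  "real n / sqrt (real n) = sqrt (real n)" "sqrt (real n) \<le> real n"
proof -
  show "1 \<le> sqrt (real n)" using assms by simp
  show 2: "sqrt (real n) * sqrt (real n) = real n" by simp
  show "real n / sqrt (real n) = sqrt (real n)" using assms
    by (metis 2 divide_eq_eq not_one_le_zero of_nat_1 of_nat_le_iff real_sqrt_eq_zero_cancel_iff)
  have "sqrt (real n) * 1 \<le> sqrt (real n) * sqrt (real n)" using \<open>1 \<le> sqrt (real n)\<close> by (intro mult_left_mono) auto
  thus "sqrt (real n) \<le> real n" using 2 by simp
qed

lemma E_absM: assumes n: "1 \<le> n"
  shows "EE n (\<lambda>ps. \<bar>Mg u ps\<bar>) \<le> sqrt (real n) * ((2 * U)^2 + 1) / 2"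
proof -
  define r where "r = sqrt (real n)"
  have r1: "1 \<le> r" and rn: "real n / r = r" using sqrt_facts[OF n] by (auto simp: r_def)
  have "EE n (\<lambda>ps. \<bar>Mg u ps\<bar>) = EE n (\<lambda>ps. \<bar>Mg u ps * 1\<bar>)" by simp
  also have "\<dots> \<le> (EE n (\<lambda>ps. (Mg u ps)^2) / r + r * EE n (\<lambda>ps. 1^2)) / 2"
    by (rule E_amgm[OF n]) (use r1 in simp)
  also have "EE n (\<lambda>ps. (1::real)^2) = 1" using E_one[OF n] by simp
  also have "EE n (\<lambda>ps. (Mg u ps)^2) / r \<le> real n * (2 * U)^2 / r"
    using EM2u[OF n] r1 by (intro divide_right_mono) auto
  also have "real n * (2 * U)^2 / r = r * (2 * U)^2"
  proof -
    have "real n * (2 * U)^2 / r = (real n / r) * (2 * U)^2" by simp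
    thus ?thesis using rn by simp
  qed
  finally show ?thesis by (simp add: r_def algebra_simps)
qed

definition C1 where "C1 = 4 * U^2 + 2 * U * ((2 * U)^2 + 1) + (2 * U)^2"

lemma asym1: assumes n: "1 \<le> n"
  shows "\<bar>EE n (\<lambda>ps. (XX ps)^2) - real n * s2 u\<bar> \<le> sqrt (real n) * C1"
proof -
  define r where "r = sqrt (real n)"
  have r1: "1 \<le> r" using sqrt_facts[OF n] by (auto simp: r_def)
  have "EE n (\<lambda>ps. (XX ps)^2) = EE n (\<lambda>ps. ((a0 ps)^2 + 2 * (a0 ps * Mg u ps)) + (Mg u ps)^2)"
    by (rule E_cong) (simp add: XX_dec[OF n] power2_eq_square algebra_simps)
  also have "\<dots> = EE n (\<lambda>ps. (a0 ps)^2) + 2 * EE n (\<lambda>ps. a0 ps * Mg u ps) + (real n - 1) * s2 u"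
    by (simp only: E_add E_cmult E_M2[OF n])
  finally have e: "EE n (\<lambda>ps. (XX ps)^2) - real n * s2 u = EE n (\<lambda>ps. (a0 ps)^2) + 2 * EE n (\<lambda>ps. a0 ps * Mg u ps) - s2 u"
    by (simp add: algebra_simps)
  have b1: "0 \<le> EE n (\<lambda>ps. (a0 ps)^2)" using E_mono[OF n, of "\<lambda>_. 0" "\<lambda>ps. (a0 ps)^2"] E_one[OF n, of 0] by simp
  have b2: "EE n (\<lambda>ps. (a0 ps)^2) \<le> 4 * U^2"
  proof -
    have "EE n (\<lambda>ps. (a0 ps)^2) \<le> EE n (\<lambda>_. (2 * U)^2)"
    proof (rule E_mono[OF n])
      fix ps assume ps: "ps \<in> paths p n"
      have "(a0 ps)^2 = \<bar>a0 ps\<bar>^2" by simp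
      also have "\<dots> \<le> (2 * U)^2" using a0_bound[OF n ps] by (intro power_mono) auto
      finally show "(a0 ps)^2 \<le> (2 * U)^2" .
    qed
    thus ?thesis using E_one[OF n] by (simp add: power_mult_distrib)
  qed
  have b3: "\<bar>EE n (\<lambda>ps. a0 ps * Mg u ps)\<bar> \<le> 2 * U * (r * ((2 * U)^2 + 1) / 2)"
  proof -
    have "\<bar>EE n (\<lambda>ps. a0 ps * Mg u ps)\<bar> \<le> EE n (\<lambda>ps. \<bar>a0 ps * Mg u ps\<bar>)" by (rule E_abs[OF n])
    also have "\<dots> \<le> EE n (\<lambda>ps. 2 * U * \<bar>Mg u ps\<bar>)"
      by (rule E_mono[OF n]) (use a0_bound[OF n] in \<open>auto simp: abs_mult intro!: mult_right_mono\<close>)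
    also have "\<dots> = 2 * U * EE n (\<lambda>ps. \<bar>Mg u ps\<bar>)" by (rule E_cmult)
    also have "\<dots> \<le> 2 * U * (r * ((2 * U)^2 + 1) / 2)"
      using E_absM[OF n] U0 by (intro mult_left_mono) (auto simp: r_def)
    finally show ?thesis .
  qed
  have b4: "0 \<le> s2 u" "s2 u \<le> (2 * U)^2" using s2_bounds[OF U_bound] by auto
  have "\<bar>EE n (\<lambda>ps. (XX ps)^2) - real n * s2 u\<bar> \<le> 4 * U^2 + 2 * (2 * U * (r * ((2 * U)^2 + 1) / 2)) + (2 * U)^2"
    unfolding e using b1 b2 b3 b4 by linarith
  also have "\<dots> = 4 * U^2 + r * (2 * U * ((2 * U)^2 + 1)) + (2 * U)^2" by (simp add: algebra_simps)
  also have "\<dots> \<le> r * (4 * U^2) + r * (2 * U * ((2 * U)^2 + 1)) + r * (2 * U)^2"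
    using r1 U0 by (intro add_mono mult_right_mono[of 1 r, simplified]) auto
  also have "\<dots> = r * C1" by (simp add: C1_def algebra_simps)
  finally show ?thesis by (simp add: r_def)
qed

end

lemma ratio_bound:
  fixes m z b x :: real
  assumes m: "0 < m" and z: "0 < z" and b1: "m / z \<le> b" and b2: "b \<le> 2 * m"
  shows "\<bar>m * (x / b)^2 - x^2 / m\<bar> \<le> 3 * z^2 * \<bar>x^2 * (b - m)\<bar> / m^2"
proof -
  have bpos: "0 < b" using b1 m z by (smt (verit) divide_pos_pos)
  have e: "m * (x / b)^2 - x^2 / m = x^2 * (m - b) * (m + b) / (m * b^2)"
    using m bpos by (simp add: power2_eq_square field_simps)
  have "\<bar>m * (x / b)^2 - x^2 / m\<bar> = \<bar>x^2 * (b - m)\<bar> * (m + b) / (m * b^2)"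
    unfolding e using m bpos by (simp add: abs_mult abs_divide abs_minus_commute)
  also have "\<dots> \<le> \<bar>x^2 * (b - m)\<bar> * (3 * m) / (m * b^2)"
    using m bpos b2 by (intro divide_right_mono mult_left_mono) auto
  also have "\<dots> = 3 * \<bar>x^2 * (b - m)\<bar> * (1 / b^2)" using m by (simp add: field_simps)
  also have "\<dots> \<le> 3 * \<bar>x^2 * (b - m)\<bar> * (z^2 / m^2)"
  proof (rule mult_left_mono)
    have "m / z \<le> b" by (rule b1)
    hence "(m / z)^2 \<le> b^2" using m z by (intro power_mono) auto
    hence "m^2 \<le> z^2 * b^2" using z by (simp add: power_divide field_simps)
    thus "1 / b^2 \<le> z^2 / m^2" using m bpos z by (simp add: field_simps)
  qed simp
  finally show ?thesis by (simp add: mult.commute mult.left_commute)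
qed

lemma ratio2:
  fixes m z b x :: real
  assumes m: "0 < m" and z: "0 < z" and b1: "m / z \<le> b"
  shows "\<bar>x / b - x / m\<bar> \<le> z * \<bar>x * (b - m)\<bar> / m^2"
proof -
  have bpos: "0 < b" using b1 m z by (smt (verit) divide_pos_pos)
  have "\<bar>x / b - x / m\<bar> = \<bar>x * (b - m)\<bar> * (1 / (m * b))"
    using m bpos by (simp add: field_simps abs_mult abs_divide abs_minus_commute)
  also have "\<dots> \<le> \<bar>x * (b - m)\<bar> * (z / m^2)"
  proof (rule mult_left_mono)
    have "m * (m / z) \<le> m * b" using b1 m by (intro mult_left_mono) auto
    hence "m^2 \<le> z * (m * b)" using z by (simp add: power2_eq_square field_simps)
    thus "1 / (m * b) \<le> z / m^2" using m bpos z by (simp add: field_simps)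
  qed simp
  finally show ?thesis by (simp add: mult.commute mult.left_commute)
qed


context tgs_h begin

definition YY where "YY ps = XX ps / BB ps" for ps

lemma asym2: assumes n: "1 \<le> n"
  shows "\<bar>real n * EE n (\<lambda>ps. (YY ps)^2) - (1 / real n) * EE n (\<lambda>ps. (XX ps)^2)\<bar>
         \<le> 3 * Zs^2 * (c4 + c1') / 2 / sqrt (real n)"
proof -
  define r where "r = sqrt (real n)"
  have r1: "1 \<le> r" and rr: "r * r = real n" and rn: "real n / r = r" using sqrt_facts[OF n] by (auto simp: r_def)
  have npos: "0 < real n" using n by simp
  have "real n * EE n (\<lambda>ps. (YY ps)^2) - (1 / real n) * EE n (\<lambda>ps. (XX ps)^2)
      = EE n (\<lambda>ps. real n * (YY ps)^2 - (1 / real n) * (XX ps)^2)"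
    by (simp only: E_diff E_cmult)
  also have "\<bar>\<dots>\<bar> \<le> EE n (\<lambda>ps. \<bar>real n * (YY ps)^2 - (1 / real n) * (XX ps)^2\<bar>)" by (rule E_abs[OF n])
  also have "\<dots> \<le> EE n (\<lambda>ps. (3 * Zs^2 / (real n)^2) * \<bar>(XX ps)^2 * TT ps\<bar>)"
  proof (rule E_mono[OF n])
    fix ps assume ps: "ps \<in> paths p n"
    have "\<bar>real n * (XX ps / BB ps)^2 - (XX ps)^2 / real n\<bar> \<le> 3 * Zs^2 * \<bar>(XX ps)^2 * (BB ps - real n)\<bar> / (real n)^2"
      by (rule ratio_bound[OF npos Zs_pos BB_bounds[OF n ps]])
    thus "\<bar>real n * (YY ps)^2 - (1 / real n) * (XX ps)^2\<bar> \<le> (3 * Zs^2 / (real n)^2) * \<bar>(XX ps)^2 * TT ps\<bar>"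
      by (simp add: YY_def TT_eq len_ps[OF n ps])
  qed
  also have "\<dots> = (3 * Zs^2 / (real n)^2) * EE n (\<lambda>ps. \<bar>(XX ps)^2 * TT ps\<bar>)" by (rule E_cmult)
  also have "\<dots> \<le> (3 * Zs^2 / (real n)^2) * (real n * r * (c4 + c1') / 2)"
  proof (rule mult_left_mono)
    have "EE n (\<lambda>ps. \<bar>(XX ps)^2 * TT ps\<bar>) \<le> (EE n (\<lambda>ps. ((XX ps)^2)^2) / r + r * EE n (\<lambda>ps. (TT ps)^2)) / 2"
      by (rule E_amgm[OF n]) (use r1 in simp)
    also have "EE n (\<lambda>ps. ((XX ps)^2)^2) = EE n (\<lambda>ps. (XX ps)^4)" by (simp add: power_mult[symmetric])
    also have "EE n (\<lambda>ps. (XX ps)^4) / r \<le> (real n)^2 * c4 / r"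
      using E_XX4[OF n] r1 by (intro divide_right_mono) auto
    also have "(real n)^2 * c4 / r = real n * r * c4"
    proof -
      have "(real n)^2 * c4 / r = real n * (real n / r) * c4" by (simp add: power2_eq_square)
      thus ?thesis using rn by simp
    qed
    also have "r * EE n (\<lambda>ps. (TT ps)^2) \<le> r * (real n * c1')"
      using E_TT2[OF n] r1 by (intro mult_left_mono) auto
    finally show "EE n (\<lambda>ps. \<bar>(XX ps)^2 * TT ps\<bar>) \<le> real n * r * (c4 + c1') / 2"
      by (simp add: algebra_simps)
  qed simp
  also have "\<dots> = 3 * Zs^2 * (c4 + c1') / 2 / r"
    using npos r1 unfolding rr[symmetric] by (simp add: power2_eq_square field_simps)
  finally show ?thesis by (simp add: r_def)
qed

lemma asym3: assumes n: "1 \<le> n"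
  shows "\<bar>EE n YY\<bar> \<le> Zs * (c1 + c1') / (2 * real n)"
proof -
  have npos: "0 < real n" using n by simp
  have "EE n YY = EE n (\<lambda>ps. (YY ps - (1 / real n) * XX ps) + (1 / real n) * XX ps)" by simp
  also have "\<dots> = EE n (\<lambda>ps. YY ps - (1 / real n) * XX ps) + (1 / real n) * EE n XX"
    by (simp only: E_add E_cmult)
  also have "EE n XX = 0" by (rule E_XX0[OF n])
  finally have e: "EE n YY = EE n (\<lambda>ps. YY ps - (1 / real n) * XX ps)" by simp
  have "\<bar>EE n YY\<bar> \<le> EE n (\<lambda>ps. \<bar>YY ps - (1 / real n) * XX ps\<bar>)" unfolding e by (rule E_abs[OF n])
  also have "\<dots> \<le> EE n (\<lambda>ps. (Zs / (real n)^2) * \<bar>XX ps * TT ps\<bar>)"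
  proof (rule E_mono[OF n])
    fix ps assume ps: "ps \<in> paths p n"
    have "\<bar>XX ps / BB ps - XX ps / real n\<bar> \<le> Zs * \<bar>XX ps * (BB ps - real n)\<bar> / (real n)^2"
      by (rule ratio2[OF npos Zs_pos BB_bounds(1)[OF n ps]])
    thus "\<bar>YY ps - (1 / real n) * XX ps\<bar> \<le> (Zs / (real n)^2) * \<bar>XX ps * TT ps\<bar>"
      by (simp add: YY_def TT_eq len_ps[OF n ps])
  qed
  also have "\<dots> = (Zs / (real n)^2) * EE n (\<lambda>ps. \<bar>XX ps * TT ps\<bar>)" by (rule E_cmult)
  also have "\<dots> \<le> (Zs / (real n)^2) * (real n * (c1 + c1') / 2)"
  proof (rule mult_left_mono)
    have "EE n (\<lambda>ps. \<bar>XX ps * TT ps\<bar>) \<le> (EE n (\<lambda>ps. (XX ps)^2) / 1 + 1 * EE n (\<lambda>ps. (TT ps)^2)) / 2"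
      by (rule E_amgm[OF n]) simp
    also have "\<dots> \<le> (real n * c1 + real n * c1') / 2" using E_XX2[OF n] E_TT2[OF n] by simp
    finally show "EE n (\<lambda>ps. \<bar>XX ps * TT ps\<bar>) \<le> real n * (c1 + c1') / 2" by (simp add: algebra_simps)
  qed (use Zs_pos in simp)
  also have "\<dots> = Zs * (c1 + c1') / (2 * real n)" using npos by (simp add: power2_eq_square field_simps)
  finally show ?thesis .
qed

lemma var_eq: assumes n: "1 \<le> n"
  shows "tgs_est_var p f h n = EE n (\<lambda>ps. (YY ps)^2) - (EE n YY)^2"
proof -
  have 1: "EE n (\<lambda>ps. (tgs_est p f h ps)^2) = EE n (\<lambda>ps. (mu^2 + (2 * mu) * YY ps) + (YY ps)^2)"
    by (rule E_cong) (simp add: est_eq[OF n] YY_def power2_eq_square algebra_simps)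
  also have "\<dots> = (mu^2 + (2 * mu) * EE n YY) + EE n (\<lambda>ps. (YY ps)^2)"
    by (simp only: E_add E_cmult E_one[OF n])
  finally have a: "EE n (\<lambda>ps. (tgs_est p f h ps)^2) = mu^2 + 2 * mu * EE n YY + EE n (\<lambda>ps. (YY ps)^2)" by simp
  have "EE n (tgs_est p f h) = EE n (\<lambda>ps. mu + YY ps)"
    by (rule E_cong) (simp add: est_eq[OF n] YY_def)
  also have "\<dots> = mu + EE n YY" by (simp only: E_add E_one[OF n])
  finally have b: "EE n (tgs_est p f h) = mu + EE n YY" .
  show ?thesis unfolding tgs_est_var_def a b by (simp add: power2_eq_square algebra_simps)
qed

definition Cfin where "Cfin = 3 * Zs^2 * (c4 + c1') / 2 + C1 + Zs^2 * (c1 + c1')^2 / 4"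

lemma final_bound: assumes n: "1 \<le> n"
  shows "\<bar>real n * tgs_est_var p f h n - s2 u\<bar> \<le> Cfin / sqrt (real n)"
proof -
  define r where "r = sqrt (real n)"
  have r1: "1 \<le> r" and rr: "r * r = real n" and rn: "real n / r = r" and rle: "r \<le> real n"
    using sqrt_facts[OF n] by (auto simp: r_def)
  have npos: "0 < real n" using n by simp
  define EY2 where "EY2 = EE n (\<lambda>ps. (YY ps)^2)"
  define EY where "EY = EE n YY"
  define EX2 where "EX2 = EE n (\<lambda>ps. (XX ps)^2)"
  have e: "real n * tgs_est_var p f h n - s2 u
      = (real n * EY2 - (1 / real n) * EX2) + ((1 / real n) * EX2 - s2 u) - real n * EY^2"
    unfolding var_eq[OF n] EY2_def EY_def EX2_def by (simp add: algebra_simps)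
  have t1: "\<bar>real n * EY2 - (1 / real n) * EX2\<bar> \<le> 3 * Zs^2 * (c4 + c1') / 2 / r"
    using asym2[OF n] by (simp add: EY2_def EX2_def r_def)
  have t2: "\<bar>(1 / real n) * EX2 - s2 u\<bar> \<le> C1 / r"
  proof -
    have "(1 / real n) * EX2 - s2 u = (EX2 - real n * s2 u) / real n" using npos by (simp add: field_simps)
    hence "\<bar>(1 / real n) * EX2 - s2 u\<bar> = \<bar>EX2 - real n * s2 u\<bar> / real n" using npos by simp
    also have "\<dots> \<le> r * C1 / real n" using asym1[OF n] npos by (intro divide_right_mono) (auto simp: EX2_def r_def)
    also have "\<dots> = C1 / r" using r1 unfolding rr[symmetric] by (simp add: field_simps)
    finally show ?thesis .
  qed
  have t3: "\<bar>real n * EY^2\<bar> \<le> Zs^2 * (c1 + c1')^2 / 4 / r"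
  proof -
    have "\<bar>EY\<bar> \<le> Zs * (c1 + c1') / (2 * real n)" using asym3[OF n] by (simp add: EY_def)
    hence "EY^2 \<le> (Zs * (c1 + c1') / (2 * real n))^2"
      by (metis abs_ge_zero abs_le_square_iff power2_abs power_mono)
    hence "real n * EY^2 \<le> real n * (Zs * (c1 + c1') / (2 * real n))^2" using npos by simp
    also have "\<dots> = Zs^2 * (c1 + c1')^2 / 4 / real n" using npos by (simp add: power2_eq_square field_simps)
    also have "\<dots> \<le> Zs^2 * (c1 + c1')^2 / 4 / r" using r1 rle by (intro divide_left_mono) auto
    finally show ?thesis using npos by simp
  qed
  have "\<bar>real n * tgs_est_var p f h n - s2 u\<bar> \<le> 3 * Zs^2 * (c4 + c1') / 2 / r + C1 / r + Zs^2 * (c1 + c1')^2 / 4 / r"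
    unfolding e using t1 t2 t3 by linarith
  also have "\<dots> = Cfin / r" by (simp add: Cfin_def add_divide_distrib)
  finally show ?thesis by (simp add: r_def)
qed

lemma limit: "(\<lambda>n. real n * tgs_est_var p f h n) \<longlonglongrightarrow> s2 u"
proof -
  have inv: "(\<lambda>n. inverse (sqrt (real n))) \<longlonglongrightarrow> 0"
    by (rule tendsto_inverse_0_at_top[OF filterlim_compose[OF sqrt_at_top filterlim_real_sequentially]])
  have g0: "(\<lambda>n. Cfin * inverse (sqrt (real n))) \<longlonglongrightarrow> 0"
    using tendsto_mult[OF tendsto_const[of Cfin] inv] by simp
  have "(\<lambda>n. real n * tgs_est_var p f h n - s2 u) \<longlonglongrightarrow> 0"
  proof (rule Lim_null_comparison[OF _ g0])
    show "\<forall>\<^sub>F n in sequentially. norm (real n * tgs_est_var p f h n - s2 u) \<le> Cfin * inverse (sqrt (real n))"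
      using eventually_ge_at_top[of 1] by eventually_elim (use final_bound in \<open>simp add: field_simps\<close>)
  qed
  from tendsto_add[OF this tendsto_const[of "s2 u"]] show ?thesis by simp
qed

end

context tgs begin

lemma inner_var: assumes a: "a \<in> SS"
  shows "(\<Sum>x\<in>SS. tgs_P p f a x * (dd u a x)^2) = Pop (\<lambda>x. (u x)^2) a - (Pop u a)^2"
proof -
  have "(\<Sum>x\<in>SS. tgs_P p f a x * (dd u a x)^2)
      = (\<Sum>x\<in>SS. tgs_P p f a x * (u x)^2) - 2 * Pop u a * (\<Sum>x\<in>SS. tgs_P p f a x * u x) + (Pop u a)^2 * (\<Sum>x\<in>SS. tgs_P p f a x)"
    by (simp add: dd_def power2_eq_square sum_subtractf sum.distrib sum_distrib_left sum_distrib_right algebra_simps)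
  also have "\<dots> = Pop (\<lambda>x. (u x)^2) a - (Pop u a)^2"
    using stoch[OF a] by (simp add: Pop_def power2_eq_square)
  finally show ?thesis .
qed

lemma s2_le: assumes Lu: "\<And>x. x \<in> SS \<Longrightarrow> Lop u x = k x"
  shows "s2 u \<le> 2 * (\<Sum>x\<in>SS. f x * k x * u x)"
proof -
  have "s2 u = (\<Sum>a\<in>SS. f a * tgs_Z p f a * Pop (\<lambda>x. (u x)^2) a) - (\<Sum>a\<in>SS. f a * tgs_Z p f a * (Pop u a)^2)"
    unfolding s2_def by (simp add: inner_var right_diff_distrib sum_subtractf)
  also have "(\<Sum>a\<in>SS. f a * tgs_Z p f a * Pop (\<lambda>x. (u x)^2) a) = (\<Sum>a\<in>SS. f a * tgs_Z p f a * (u a)^2)"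
    unfolding Pop_def by (rule stationary)
  also have "(\<Sum>a\<in>SS. f a * tgs_Z p f a * (u a)^2) - (\<Sum>a\<in>SS. f a * tgs_Z p f a * (Pop u a)^2)
      = (\<Sum>a\<in>SS. 2 * (f a * k a * u a) - f a * tgs_Z p f a * (u a - Pop u a)^2)"
    unfolding sum_subtractf[symmetric]
  proof (rule sum.cong[OF refl])
    fix a assume a: "a \<in> SS"
    have ka: "k a = tgs_Z p f a * (u a - Pop u a)" using Lu[OF a] by (simp add: Lop_def)
    show "f a * tgs_Z p f a * (u a)^2 - f a * tgs_Z p f a * (Pop u a)^2
        = 2 * (f a * k a * u a) - f a * tgs_Z p f a * (u a - Pop u a)^2"
      unfolding ka by (simp add: power2_eq_square algebra_simps)
  qed
  also have "\<dots> \<le> (\<Sum>a\<in>SS. 2 * (f a * k a * u a))"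
    by (intro sum_mono) (simp add: less_imp_le[OF fpos] less_imp_le[OF Z_pos])
  finally show ?thesis by (simp add: sum_distrib_left)
qed

lemma form_bound: assumes Lu: "\<And>x. x \<in> SS \<Longrightarrow> Lop u x = k x" and mk: "mean k = 0"
  and lpos: "0 < lam" and poinc: "\<And>w. mean w = 0 \<Longrightarrow> lam * nrm w \<le> form w w"
  shows "(\<Sum>x\<in>SS. f x * k x * u x) \<le> nrm k / lam"
proof -
  define m where "m = mean u"
  define ut where "ut x = u x - m" for x
  have mut: "mean ut = 0" by (simp add: ut_def mean_def right_diff_distrib sum_subtractf sum_distrib_right[symmetric] fsum m_def)
  have Lut: "x \<in> SS \<Longrightarrow> Lop ut x = k x" for x
  proof -
    assume x: "x \<in> SS"
    have "Lop ut x = Lop (\<lambda>y. 1 * u y + (- m) * 1) x" unfolding ut_def by simp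
    also have "\<dots> = 1 * Lop u x + (- m) * Lop (\<lambda>_. 1) x" by (rule Lop_lin)
    finally show ?thesis using Lop_const[OF x, of 1] Lu[OF x] by simp
  qed
  define F where "F = (\<Sum>x\<in>SS. f x * k x * u x)"
  have F1: "F = ip k ut"
  proof -
    have "ip k ut = F - m * mean k"
      by (simp add: F_def ip_def ut_def mean_def right_diff_distrib sum_subtractf sum_distrib_left algebra_simps)
    thus ?thesis using mk by simp
  qed
  have F2: "F = form ut ut"
  proof -
    have "form ut ut = (\<Sum>x\<in>SS. ut x * (f x * k x))" unfolding form_def by (intro sum.cong refl) (simp add: Lut)
    thus ?thesis using F1 by (simp add: ip_def algebra_simps)
  qed
  have "lam * nrm ut \<le> F" using poinc[OF mut] F2 by simp
  moreover have "2 * F \<le> lam * nrm ut + nrm k / lam" using cs_ip[OF lpos, of k ut] F1 by simp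
  ultimately have "F \<le> nrm k / lam" by linarith
  thus ?thesis by (simp add: F_def)
qed

end

theorem lemma2:
  fixes p :: nat and f h :: "bool list \<Rightarrow> real"
  assumes "p \<ge> 1"
    and "\<forall>g\<in>states p. f g > 0"
    and "(\<Sum>g\<in>states p. f g) = 1"
  shows "convergent (\<lambda>n. real n * tgs_est_var p f h n)
         \<and> tgs_asym_var p f h \<le> 2 * var_f p f h / gap p f"
proof -
  interpret tgs p f using assms by unfold_locales auto
  define mu0 where "mu0 = (\<Sum>y\<in>states p. f y * h y)"
  define k where "k x = h x - mu0" for x
  have mk: "mean k = 0" by (simp add: mean_def k_def right_diff_distrib sum_subtractf sum_distrib_right[symmetric] fsum mu0_def)
  obtain u where Lu: "\<And>x. x \<in> SS \<Longrightarrow> Lop u x = k x" using poisson[OF mk] by blast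
  define k2 where "k2 x = 1 - tgs_Z p f x" for x
  have mk2: "mean k2 = 0" by (simp add: mean_def k2_def right_diff_distrib sum_subtractf fsum sum_fZ)
  obtain v where Lv: "\<And>x. x \<in> SS \<Longrightarrow> Lop v x = k2 x" using poisson[OF mk2] by blast
  interpret tgs_h p f h u v
  proof unfold_locales
    fix x assume x: "x \<in> states p"
    have z: "tgs_Z p f x \<noteq> 0" using Z_pos[OF x] by simp
    show "u x - Pop u x = (h x - (\<Sum>y\<in>states p. f y * h y)) / tgs_Z p f x"
      using Lu[OF x] z by (simp add: Lop_def k_def mu0_def field_simps)
    show "v x - Pop v x = 1 / tgs_Z p f x - 1"
      using Lv[OF x] z by (simp add: Lop_def k2_def field_simps)
  qed
  obtain lam where lpos: "0 < lam" and lE: "lam \<in> eigenvalues_negQ p f"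
    and poinc: "\<And>w. mean w = 0 \<Longrightarrow> lam * nrm w \<le> form w w"
    and lmin: "\<And>l. l \<in> eigenvalues_negQ p f \<Longrightarrow> l \<noteq> 0 \<Longrightarrow> lam \<le> l"
    using eig by blast
  have gap: "gap p f = lam" unfolding gap_def
    by (rule Min_eqI) (use eig_finite lE lpos lmin in auto)
  have vf: "var_f p f h = nrm k"
  proof -
    have "nrm k = (\<Sum>x\<in>SS. f x * (h x)^2) - 2 * mu0 * (\<Sum>x\<in>SS. f x * h x) + mu0^2 * (\<Sum>x\<in>SS. f x)"
      by (simp add: nrm_def k_def power2_eq_square sum_subtractf sum.distrib sum_distrib_left sum_distrib_right algebra_simps)
    thus ?thesis unfolding var_f_def mu0_def[symmetric] by (simp add: fsum power2_eq_square)
  qed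
  have lim: "(\<lambda>n. real n * tgs_est_var p f h n) \<longlonglongrightarrow> s2 u" by (rule limit)
  have "tgs_asym_var p f h = s2 u" unfolding tgs_asym_var_def using lim by (rule limI)
  also have "s2 u \<le> 2 * (\<Sum>x\<in>SS. f x * k x * u x)" by (rule s2_le[OF Lu])
  also have "\<dots> \<le> 2 * (nrm k / lam)" using form_bound[OF Lu mk lpos poinc] by simp
  also have "\<dots> = 2 * var_f p f h / gap p f" by (simp add: gap vf)
  finally show ?thesis using lim by (auto simp: convergent_def)
qed

end
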